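(* Let $\mathbf{A}$ be a finite metric space and let $p,q$ be partial isometries of $\mathbf{A}$ with $\mathrm{Per}(p)=\mathrm{Fix}(p)$, $\mathrm{Per}(q)=\mathrm{Fix}(q)$ and $\mathrm{Fix}(p)\cap\mathrm{Fix}(q)\neq\emptyset$. Then there exist a finite metric space $(\mathbf{B},d)$ containing $\mathbf{A}$ as a metric subspace, partial isometries $\bar p\supseteq p$ and $\bar q\supseteq q$ of $\mathbf{B}$, and a reduced word $w=t^Kv\in F(s,t)$ with $K\neq0$ (the product $t^Kv$ reduced) such that: (i) $\mathrm{Per}(\bar p)=\mathrm{Per}(p)$ and $\mathrm{Per}(\bar q)=\mathrm{Per}(q)$; (ii) $w(\bar p,\bar q)(a)$ is defined for every $a\in\mathbf{A}$, and $\mathrm{dom}(\bar p)\cup w(\bar p,\bar q)(\mathbf{A})$ is the free amalgam of $\mathrm{dom}(\bar p)$ and $w(\bar p,\bar q)(\mathbf{A})$ over $\mathrm{Fix}(p)\cap\mathrm{Fix}(q)$, i.e. for all $x\in w(\bar p,\bar q)(\mathbf{A})$ and $y\in\mathrm{dom}(\bar p)$, $$d(x,y)=\min\{d(x,z)+d(z,y): z\in\mathrm{Fix}(p)\cap\mathrm{Fix}(q)\}.$$ Moreover, all distances in $\mathbf{B}$ lie in the additive semigroup generated by the distances in $\mathbf{A}$; in particular $\mathrm{den}(\mathrm{dom}(\bar p)\cup\mathbf{A})=\mathrm{den}(\mathbf{A})=\mathrm{den}(\mathrm{dom}(\bar q)\cup\mathbf{A})$.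
   Context: A partial isometry of a metric space $\mathbf{C}$ is an isometry $p$ between finite subsets $\mathrm{dom}(p),\mathrm{ran}(p)\subseteq\mathbf{C}$; $\bar p\supseteq p$ means $\bar p$ extends $p$. $\mathrm{Fix}(p)=\{x\in\mathrm{dom}(p):p(x)=x\}$. A point $x\in\mathrm{dom}(p)$ is periodic if there is $n>0$ with $x,p(x),\dots,p^n(x)\in\mathrm{dom}(p)$ (all defined) and $p^n(x)=x$; $\mathrm{Per}(p)$ is the set of periodic points. For a finite metric space with at least two points, $\mathrm{den}$ is the minimal distance between two distinct points. $F(s,t)$ is the free group on $s,t$; for a reduced word $w=t^{n_k}s^{m_k}\cdots t^{n_1}s^{m_1}$ and partial maps $p,q$, $w(p,q)(c)=q^{n_k}p^{m_k}\cdots q^{n_1}p^{m_1}(c)$ whenever the right-hand side is defined (the rightmost letter acts first). *)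

theory Defs
  imports Complex_Main
begin

text \<open>A finite metric space is represented by a carrier set X together with a
  distance function d (only its values on X matter).\<close>
definition metric_on :: "'a set \<Rightarrow> ('a \<Rightarrow> 'a \<Rightarrow> real) \<Rightarrow> bool" where
  "metric_on X d \<longleftrightarrow>
     (\<forall>x\<in>X. \<forall>y\<in>X. 0 \<le> d x y \<and> (d x y = 0 \<longleftrightarrow> x = y) \<and> d x y = d y x) \<and>
     (\<forall>x\<in>X. \<forall>y\<in>X. \<forall>z\<in>X. d x z \<le> d x y + d y z)"

definition partial_isometry :: "'a set \<Rightarrow> ('a \<Rightarrow> 'a \<Rightarrow> real) \<Rightarrow> ('a \<rightharpoonup> 'a) \<Rightarrow> bool" where
  "partial_isometry X d p \<longleftrightarrow>
     finite (dom p) \<and> dom p \<subseteq> X \<and> ran p \<subseteq> X \<and> inj_on p (dom p) \<and>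
     (\<forall>x\<in>dom p. \<forall>y\<in>dom p. d (the (p x)) (the (p y)) = d x y)"

primrec pit :: "('a \<rightharpoonup> 'a) \<Rightarrow> nat \<Rightarrow> 'a \<Rightarrow> 'a option" where
  "pit p 0 x = Some x"
| "pit p (Suc n) x = Option.bind (pit p n x) p"

definition Fix :: "('a \<rightharpoonup> 'a) \<Rightarrow> 'a set" where
  "Fix p = {x. p x = Some x}"

definition Per :: "('a \<rightharpoonup> 'a) \<Rightarrow> 'a set" where
  "Per p = {x \<in> dom p. \<exists>n>0. pit p n x = Some x}"

definition pinv :: "('a \<rightharpoonup> 'a) \<Rightarrow> ('a \<rightharpoonup> 'a)" where
  "pinv p y = (if \<exists>x. p x = Some y then Some (THE x. p x = Some y) else None)"

definition ppow :: "('a \<rightharpoonup> 'a) \<Rightarrow> int \<Rightarrow> ('a \<rightharpoonup> 'a)" where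
  "ppow p n = (if 0 \<le> n then pit p (nat n) else pit (pinv p) (nat (- n)))"

text \<open>Words in the free group F(s,t): lists of syllables (generator, exponent),
  written left to right; the rightmost syllable acts first.\<close>
datatype gen = S | T

definition reduced_word :: "(gen \<times> int) list \<Rightarrow> bool" where
  "reduced_word w \<longleftrightarrow>
     (\<forall>i<length w. snd (w ! i) \<noteq> 0) \<and>
     (\<forall>i. Suc i < length w \<longrightarrow> fst (w ! i) \<noteq> fst (w ! Suc i))"

primrec eval_word :: "(gen \<times> int) list \<Rightarrow> ('a \<rightharpoonup> 'a) \<Rightarrow> ('a \<rightharpoonup> 'a) \<Rightarrow> 'a \<Rightarrow> 'a option" where
  "eval_word [] p q c = Some c"
| "eval_word (g # w) p q c =
     Option.bind (eval_word w p q c) (ppow (if fst g = S then p else q) (snd g))"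

inductive_set add_semigroup_gen :: "real set \<Rightarrow> real set" for G where
  base: "x \<in> G \<Longrightarrow> x \<in> add_semigroup_gen G"
| plus: "x \<in> add_semigroup_gen G \<Longrightarrow> y \<in> add_semigroup_gen G \<Longrightarrow> x + y \<in> add_semigroup_gen G"

definition den :: "'a set \<Rightarrow> ('a \<Rightarrow> 'a \<Rightarrow> real) \<Rightarrow> real" where
  "den X d = Min {d x y | x y. x \<in> X \<and> y \<in> X \<and> x \<noteq> y}"

end

theory Submission
  imports Defs
begin

fun chainw :: "('v \<Rightarrow> 'v \<Rightarrow> bool) \<Rightarrow> 'v list \<Rightarrow> bool" where
  "chainw R (a # b # xs) = (R a b \<and> chainw R (b # xs))"
| "chainw R _ = True"

fun wlen :: "('v \<Rightarrow> 'v \<Rightarrow> real) \<Rightarrow> 'v list \<Rightarrow> real" where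
  "wlen c (a # b # xs) = c a b + wlen c (b # xs)"
| "wlen c _ = 0"

lemma chainw_Cons: "chainw R (a # xs) \<longleftrightarrow> (xs = [] \<or> (R a (hd xs) \<and> chainw R xs))"
  by (cases xs) auto

lemma wlen_Cons: "wlen c (a # xs) = (if xs = [] then 0 else c a (hd xs) + wlen c xs)"
  by (cases xs) auto

lemma chainw_append:
  "xs \<noteq> [] \<Longrightarrow> ys \<noteq> [] \<Longrightarrow> last xs = hd ys \<Longrightarrow> chainw R xs \<Longrightarrow> chainw R ys
   \<Longrightarrow> chainw R (xs @ tl ys) \<and> wlen c (xs @ tl ys) = wlen c xs + wlen c ys"
proof (induction xs)
  case Nil then show ?case by simp
next
  case (Cons a xs)
  show ?case
  proof (cases "xs = []")
    case True
    then show ?thesis using Cons.prems by (cases ys) auto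
  next
    case False
    then have "chainw R (xs @ tl ys) \<and> wlen c (xs @ tl ys) = wlen c xs + wlen c ys"
      using Cons by (simp add: chainw_Cons)
    then show ?thesis using False Cons.prems
      by (simp add: chainw_Cons wlen_Cons hd_append)
  qed
qed

lemma chainw_rev:
  assumes "\<And>u v. R u v \<Longrightarrow> R v u" "\<And>u v. R u v \<Longrightarrow> c v u = c u v"
  shows "chainw R xs \<Longrightarrow> chainw R (rev xs) \<and> wlen c (rev xs) = wlen c xs"
proof (induction xs)
  case Nil then show ?case by simp
next
  case (Cons a xs)
  show ?case
  proof (cases "xs = []")
    case True then show ?thesis by simp
  next
    case False
    have h: "chainw R (rev xs) \<and> wlen c (rev xs) = wlen c xs" using Cons False by (simp add: chainw_Cons)
    have r: "R a (hd xs)" using Cons.prems False by (simp add: chainw_Cons)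
    have "chainw R (rev xs @ tl [hd xs, a]) \<and> wlen c (rev xs @ tl [hd xs, a]) = wlen c (rev xs) + wlen c [hd xs, a]"
      apply (rule chainw_append)
      using False h r assms(1) by (auto simp: last_rev)
    then show ?thesis using h r assms(2) False by (simp add: wlen_Cons)
  qed
qed

lemma chainw_pot:
  assumes "\<And>u v. R u v \<Longrightarrow> \<psi> u \<le> \<psi> v + c u v"
  shows "chainw R xs \<Longrightarrow> xs \<noteq> [] \<Longrightarrow> \<psi> (hd xs) \<le> \<psi> (last xs) + wlen c xs"
proof (induction xs)
  case Nil then show ?case by simp
next
  case (Cons a xs)
  then show ?case
    by (cases "xs = []") (auto simp: chainw_Cons wlen_Cons intro: order_trans[OF assms])
qed

lemma chainw_map:
  assumes "\<And>u v. R u v \<Longrightarrow> R' (g u) (g v)" "\<And>u v. R u v \<Longrightarrow> c' (g u) (g v) = c u v"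
  shows "chainw R xs \<Longrightarrow> chainw R' (map g xs) \<and> wlen c' (map g xs) = wlen c xs"
proof (induction xs)
  case Nil then show ?case by simp
next
  case (Cons a xs)
  then show ?case
    by (cases "xs = []") (auto simp: chainw_Cons wlen_Cons assms hd_map)
qed

lemma chainw_sum:
  assumes "\<And>u v. R u v \<Longrightarrow> c u v \<in> G"
  shows "chainw R xs \<Longrightarrow> \<exists>ys. set ys \<subseteq> G \<and> wlen c xs = sum_list ys"
proof (induction xs)
  case Nil then show ?case by (intro exI[of _ "[]"]) simp
next
  case (Cons a xs)
  show ?case
  proof (cases "xs = []")
    case True then show ?thesis by (intro exI[of _ "[]"]) simp
  next
    case False
    then obtain ys where "set ys \<subseteq> G" "wlen c xs = sum_list ys" using Cons by (auto simp: chainw_Cons)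
    then show ?thesis using False Cons.prems assms
      by (intro exI[of _ "c a (hd xs) # ys"]) (auto simp: chainw_Cons wlen_Cons)
  qed
qed

lemma pit_Suc_first: "pit f (Suc n) x = (case f x of None \<Rightarrow> None | Some y \<Rightarrow> pit f n y)"
proof (induction n arbitrary: x)
  case 0 then show ?case by (cases "f x") auto
next
  case (Suc n)
  show ?case using Suc[of x] by (cases "f x") (auto split: option.splits)
qed

lemma pit_SucE: "pit f (Suc n) x = Some v \<Longrightarrow> \<exists>w. pit f n x = Some w \<and> f w = Some v"
  by (cases "pit f n x") auto

lemma pit_mono: "f \<subseteq>\<^sub>m g \<Longrightarrow> pit f n x = Some y \<Longrightarrow> pit g n x = Some y"
proof (induction n arbitrary: y)
  case 0 then show ?case by (metis pit.simps(1))
next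
  case (Suc n)
  obtain w where w: "pit f n x = Some w" "f w = Some y" using pit_SucE[OF Suc.prems(2)] by blast
  have "g w = Some y" using Suc.prems(1) w(2) unfolding map_le_def by force
  then show ?case using Suc.IH[OF Suc.prems(1) w(1)] by simp
qed

lemma pit_fix: "f z = Some z \<Longrightarrow> pit f n z = Some z"
  by (induction n) auto

lemma Fix_sub_Per: "Fix f \<subseteq> Per f"
  unfolding Fix_def Per_def by (auto intro!: exI[of _ 1])

lemma pit_iso_fix:
  assumes "partial_isometry X d f" "z \<in> Fix f"
  shows "pit f n u = Some v \<Longrightarrow> d v z = d u z"
proof (induction n arbitrary: v)
  case 0 then show ?case by simp
next
  case (Suc n)
  obtain w where w: "pit f n u = Some w" "f w = Some v" using pit_SucE[OF Suc.prems] by blast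
  have "z \<in> dom f" "f z = Some z" using assms(2) by (auto simp: Fix_def)
  moreover have "w \<in> dom f" using w by auto
  ultimately have "d (the (f w)) (the (f z)) = d w z" using assms(1) unfolding partial_isometry_def by (meson)
  then show ?case using w Suc.IH[of w] \<open>f z = Some z\<close> by simp
qed

lemma ppow_nat: "ppow f (int n) = pit f n"
  unfolding ppow_def by simp

lemma pit_in_ran: "pit f (Suc n) x = Some y \<Longrightarrow> y \<in> ran f"
  using pit_SucE by (fastforce simp: ran_def)

lemma sg_sum_list: "set ys \<subseteq> G \<Longrightarrow> ys \<noteq> [] \<Longrightarrow> sum_list ys \<in> add_semigroup_gen G"
proof (induction ys)
  case Nil then show ?case by simp
next
  case (Cons a ys)
  then show ?case by (cases "ys = []") (auto intro: add_semigroup_gen.intros)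
qed

lemma sg_mono: "x \<in> add_semigroup_gen G \<Longrightarrow> G \<subseteq> add_semigroup_gen H \<Longrightarrow> x \<in> add_semigroup_gen H"
  by (induction rule: add_semigroup_gen.induct) (auto intro: add_semigroup_gen.intros)

lemma sg_lower: "x \<in> add_semigroup_gen G \<Longrightarrow> (\<forall>g\<in>G. g = 0 \<or> \<delta> \<le> g) \<Longrightarrow> \<delta> > 0 \<Longrightarrow> x = 0 \<or> \<delta> \<le> x"
  by (induction rule: add_semigroup_gen.induct) auto

lemma sum_list_ge_len: "\<forall>z\<in>set zs. \<delta> \<le> z \<Longrightarrow> real (length zs) * \<delta> \<le> sum_list zs"
  by (induction zs) (auto simp: algebra_simps)

lemma finite_bounded_sums:
  fixes G :: "real set"
  assumes "finite G" "\<forall>g\<in>G. g = 0 \<or> \<delta> \<le> g" "\<delta> > 0"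
  shows "finite {s. \<exists>ys. set ys \<subseteq> G \<and> s = sum_list ys \<and> s \<le> b}"
proof -
  let ?n = "nat \<lceil>b / \<delta>\<rceil>"
  have "{s. \<exists>ys. set ys \<subseteq> G \<and> s = sum_list ys \<and> s \<le> b} \<subseteq> sum_list ` {zs. set zs \<subseteq> G \<and> length zs \<le> ?n}"
  proof
    fix s assume "s \<in> {s. \<exists>ys. set ys \<subseteq> G \<and> s = sum_list ys \<and> s \<le> b}"
    then obtain ys where ys: "set ys \<subseteq> G" "s = sum_list ys" "s \<le> b" by auto
    let ?zs = "filter (\<lambda>x. x \<noteq> 0) ys"
    have e: "sum_list ?zs = sum_list ys" by (induction ys) auto
    have "\<forall>z\<in>set ?zs. \<delta> \<le> z" using ys assms(2) by auto
    then have "real (length ?zs) * \<delta> \<le> sum_list ?zs" by (rule sum_list_ge_len)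
    then have "real (length ?zs) \<le> b / \<delta>" using e ys assms(3) by (simp add: pos_le_divide_eq)
    then have "length ?zs \<le> ?n" by linarith
    moreover have "set ?zs \<subseteq> G" using ys by auto
    ultimately show "s \<in> sum_list ` {zs. set zs \<subseteq> G \<and> length zs \<le> ?n}"
      using e ys by (auto intro!: image_eqI[of _ _ ?zs])
  qed
  moreover have "finite {zs. set zs \<subseteq> G \<and> length zs \<le> ?n}"
    using finite_lists_length_le[OF assms(1)] by blast
  ultimately show ?thesis by (rule finite_subset[OF _ finite_imageI])
qed

locale uctx =
  fixes X :: "'b set" and d :: "'b \<Rightarrow> 'b \<Rightarrow> real" and f :: "'b \<rightharpoonup> 'b" and \<delta> :: real
  assumes finX: "finite X" and met: "metric_on X d" and iso: "partial_isometry X d f"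
    and perfix: "Per f = Fix f" and fixne: "Fix f \<noteq> {}" and dpos: "\<delta> > 0"
    and dle: "\<And>a b. a \<in> X \<Longrightarrow> b \<in> X \<Longrightarrow> a \<noteq> b \<Longrightarrow> \<delta> \<le> d a b"
begin

lemma domf: "dom f \<subseteq> X" using iso unfolding partial_isometry_def by auto
lemma ranf: "ran f \<subseteq> X" using iso unfolding partial_isometry_def by auto
lemma findom: "finite (dom f)" using iso unfolding partial_isometry_def by auto
lemma injf: "inj_on f (dom f)" using iso unfolding partial_isometry_def by auto
lemma isof: "a \<in> dom f \<Longrightarrow> b \<in> dom f \<Longrightarrow> d (the (f a)) (the (f b)) = d a b"
  using iso unfolding partial_isometry_def by auto
lemma fX: "f a = Some b \<Longrightarrow> b \<in> X" using ranf by (auto simp: ran_def)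
lemma fdX: "f a = Some b \<Longrightarrow> a \<in> X" using domf by auto
lemma iso2: "f a = Some a' \<Longrightarrow> f b = Some b' \<Longrightarrow> d a' b' = d a b"
  using isof[of a b] by auto
lemma inj2: "f a = Some c \<Longrightarrow> f b = Some c \<Longrightarrow> a = b"
  by (metis domI inj_onD injf)
lemma FixX: "z \<in> Fix f \<Longrightarrow> z \<in> X" using domf by (auto simp: Fix_def)
lemma Fixf: "z \<in> Fix f \<Longrightarrow> f z = Some z" by (auto simp: Fix_def)

lemma dnn: "a \<in> X \<Longrightarrow> b \<in> X \<Longrightarrow> 0 \<le> d a b" using met unfolding metric_on_def by auto
lemma d0: "a \<in> X \<Longrightarrow> d a a = 0" using met unfolding metric_on_def by auto
lemma d0iff: "a \<in> X \<Longrightarrow> b \<in> X \<Longrightarrow> d a b = 0 \<longleftrightarrow> a = b" using met unfolding metric_on_def by auto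
lemma dsym: "a \<in> X \<Longrightarrow> b \<in> X \<Longrightarrow> d a b = d b a" using met unfolding metric_on_def by auto
lemma dtri: "a \<in> X \<Longrightarrow> b \<in> X \<Longrightarrow> c \<in> X \<Longrightarrow> d a c \<le> d a b + d b c"
  using met unfolding metric_on_def by auto

definition adj :: "('b \<times> int) \<Rightarrow> ('b \<times> int) \<Rightarrow> bool" where
  "adj u v \<longleftrightarrow> fst u \<in> X \<and> fst v \<in> X \<and> (snd v = snd u \<or> (snd v = snd u - 1 \<and> f (fst u) = Some (fst v))
     \<or> (snd v = snd u + 1 \<and> f (fst v) = Some (fst u)))"

definition cost :: "('b \<times> int) \<Rightarrow> ('b \<times> int) \<Rightarrow> real" where
  "cost u v = (if snd u = snd v then d (fst u) (fst v) else 0)"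

definition walks :: "('b \<times> int) \<Rightarrow> ('b \<times> int) \<Rightarrow> ('b \<times> int) list set" where
  "walks u v = {xs. xs \<noteq> [] \<and> hd xs = u \<and> last xs = v \<and> chainw adj xs \<and> fst u \<in> X}"

definition D :: "('b \<times> int) \<Rightarrow> ('b \<times> int) \<Rightarrow> real" where
  "D u v = Inf (wlen cost ` walks u v)"

lemma adj_sym: "adj u v \<Longrightarrow> adj v u"
  unfolding adj_def by auto

lemma cost_sym: "adj u v \<Longrightarrow> cost v u = cost u v"
  unfolding adj_def cost_def using dsym by auto

lemma cost_nn: "adj u v \<Longrightarrow> 0 \<le> cost u v"
  unfolding adj_def cost_def using dnn by auto

lemma wlen_nn: "chainw adj xs \<Longrightarrow> xs \<noteq> [] \<Longrightarrow> 0 \<le> wlen cost xs"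
  using chainw_pot[of adj "\<lambda>_. 0" cost xs] cost_nn by auto

lemma walk_last: "xs \<in> walks u v \<Longrightarrow> fst v \<in> X"
proof -
  assume a: "xs \<in> walks u v"
  have "chainw adj xs \<Longrightarrow> xs \<noteq> [] \<Longrightarrow> fst (hd xs) \<in> X \<Longrightarrow> fst (last xs) \<in> X" for xs
  proof (induction xs)
    case Nil then show ?case by simp
  next
    case (Cons a xs) then show ?case by (cases "xs = []") (auto simp: chainw_Cons adj_def)
  qed
  then show ?thesis using a unfolding walks_def by auto
qed

lemma walk_cat: "xs \<in> walks u v \<Longrightarrow> ys \<in> walks v w \<Longrightarrow>
    xs @ tl ys \<in> walks u w \<and> wlen cost (xs @ tl ys) = wlen cost xs + wlen cost ys"
proof -
  assume a: "xs \<in> walks u v" "ys \<in> walks v w"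
  have c: "chainw adj (xs @ tl ys) \<and> wlen cost (xs @ tl ys) = wlen cost xs + wlen cost ys"
    using a by (intro chainw_append) (auto simp: walks_def)
  have "last (xs @ tl ys) = w" using a unfolding walks_def
    by (cases ys) (auto simp: last_append)
  then show ?thesis using a c unfolding walks_def by auto
qed

lemma walk_rev: "xs \<in> walks u v \<Longrightarrow> rev xs \<in> walks v u \<and> wlen cost (rev xs) = wlen cost xs"
proof -
  assume a: "xs \<in> walks u v"
  have "chainw adj (rev xs) \<and> wlen cost (rev xs) = wlen cost xs"
    using a by (intro chainw_rev) (auto simp: walks_def adj_sym cost_sym)
  then show ?thesis using a walk_last[OF a] unfolding walks_def by (auto simp: hd_rev last_rev)
qed

lemma walk_edge: "adj u v \<Longrightarrow> [u, v] \<in> walks u v"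
  unfolding walks_def adj_def by auto

lemma walk_single: "fst u \<in> X \<Longrightarrow> [u] \<in> walks u u"
  unfolding walks_def by auto

definition reach where "reach u v \<longleftrightarrow> walks u v \<noteq> {}"

lemma reach_trans: "reach u v \<Longrightarrow> reach v w \<Longrightarrow> reach u w"
  unfolding reach_def using walk_cat by blast
lemma reach_sym: "reach u v \<Longrightarrow> reach v u"
  unfolding reach_def using walk_rev by blast
lemma reach_edge: "adj u v \<Longrightarrow> reach u v"
  unfolding reach_def using walk_edge by blast

lemma reach_vert: assumes z: "z \<in> Fix f" shows "reach (z, k) (z, k + int n)"
proof (induction n)
  case 0 then show ?case using walk_single[of "(z,k)"] FixX[OF z] by (auto simp: reach_def)
next
  case (Suc n)
  have "adj (z, k + int n) (z, k + int (Suc n))" using z FixX[OF z] Fixf[OF z] by (auto simp: adj_def)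
  then show ?case using Suc reach_trans reach_edge by blast
qed

lemma reach_all: assumes "fst u \<in> X" "fst v \<in> X" shows "reach u v"
proof -
  obtain z where z: "z \<in> Fix f" using fixne by auto
  obtain a k b l where uv: "u = (a, k)" "v = (b, l)" by (cases u, cases v)
  have 1: "reach (a, k) (z, k)" using assms uv FixX[OF z] by (intro reach_edge) (auto simp: adj_def)
  have 2: "reach (z, l) (b, l)" using assms uv FixX[OF z] by (intro reach_edge) (auto simp: adj_def)
  have 3: "reach (z, k) (z, l)"
  proof (cases "k \<le> l")
    case True
    then show ?thesis using reach_vert[OF z, of k "nat (l - k)"] by simp
  next
    case False
    then show ?thesis using reach_vert[OF z, of l "nat (k - l)"] reach_sym by simp
  qed
  show ?thesis using 1 2 3 reach_trans uv by blast
qed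

lemma walks_ne: "fst u \<in> X \<Longrightarrow> fst v \<in> X \<Longrightarrow> walks u v \<noteq> {}"
  using reach_all reach_def by blast

lemma bdd: "bdd_below (wlen cost ` walks u v)"
  by (rule bdd_belowI[of _ 0]) (auto simp: walks_def intro: wlen_nn)

lemma D_le: "xs \<in> walks u v \<Longrightarrow> D u v \<le> wlen cost xs"
  unfolding D_def by (rule cInf_lower[OF imageI bdd])

lemma D_ge: assumes "fst u \<in> X" "fst v \<in> X" "(\<And>xs. xs \<in> walks u v \<Longrightarrow> c \<le> wlen cost xs)" shows "c \<le> D u v"
  unfolding D_def
proof (rule cInf_greatest)
  show "wlen cost ` walks u v \<noteq> {}" using walks_ne[OF assms(1,2)] by blast
next
  fix x assume "x \<in> wlen cost ` walks u v"
  then show "c \<le> x" using assms(3) by blast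
qed

definition G where "G = {d a b | a b. a \<in> X \<and> b \<in> X}"

lemma finG: "finite G"
proof -
  have "G = (\<lambda>(a,b). d a b) ` (X \<times> X)" unfolding G_def by auto
  then show ?thesis using finX by simp
qed

lemma G_prop: "\<forall>g\<in>G. g = 0 \<or> \<delta> \<le> g"
  unfolding G_def using dle d0iff by fastforce

lemma cost_G: "adj u v \<Longrightarrow> cost u v \<in> G"
  unfolding adj_def cost_def G_def using d0 by force

lemma wlen_G: "xs \<in> walks u v \<Longrightarrow> \<exists>ys. set ys \<subseteq> G \<and> wlen cost xs = sum_list ys"
  unfolding walks_def using chainw_sum[of adj cost G xs] cost_G by auto

lemma D_attained: assumes "fst u \<in> X" "fst v \<in> X" shows "\<exists>xs \<in> walks u v. D u v = wlen cost xs"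
proof -
  let ?S = "wlen cost ` walks u v"
  obtain xs0 where x0: "xs0 \<in> walks u v" using walks_ne[OF assms] by blast
  let ?s0 = "wlen cost xs0"
  let ?S' = "{s \<in> ?S. s \<le> ?s0}"
  have "?S' \<subseteq> {s. \<exists>ys. set ys \<subseteq> G \<and> s = sum_list ys \<and> s \<le> ?s0}"
    using wlen_G by fastforce
  then have fin: "finite ?S'" using finite_bounded_sums[OF finG G_prop dpos] finite_subset by blast
  have ne: "?S' \<noteq> {}" using x0 by auto
  let ?m = "Min ?S'"
  have mS: "?m \<in> ?S" using Min_in[OF fin ne] by auto
  have ml: "\<And>s. s \<in> ?S \<Longrightarrow> ?m \<le> s"
  proof -
    fix s assume s: "s \<in> ?S"
    show "?m \<le> s"
    proof (cases "s \<le> ?s0")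
      case True then show ?thesis using Min_le[OF fin] s by auto
    next
      case False
      have "?m \<le> ?s0" using Min_le[OF fin] x0 by auto
      then show ?thesis using False by auto
    qed
  qed
  have "D u v = ?m" unfolding D_def by (rule cInf_eq_minimum[OF mS ml])
  then show ?thesis using mS by auto
qed

lemma D_nn: "fst u \<in> X \<Longrightarrow> fst v \<in> X \<Longrightarrow> 0 \<le> D u v"
  by (rule D_ge) (auto simp: walks_def intro: wlen_nn)

lemma D_refl: "fst u \<in> X \<Longrightarrow> D u u = 0"
  using D_le[OF walk_single, of u] D_nn[of u u] by simp

lemma D_tri: assumes "fst u \<in> X" "fst v \<in> X" "fst w \<in> X" shows "D u w \<le> D u v + D v w"
proof -
  obtain xs where xs: "xs \<in> walks u v" "D u v = wlen cost xs" using D_attained[OF assms(1,2)] by blast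
  obtain ys where ys: "ys \<in> walks v w" "D v w = wlen cost ys" using D_attained[OF assms(2,3)] by blast
  have w: "xs @ tl ys \<in> walks u w" "wlen cost (xs @ tl ys) = wlen cost xs + wlen cost ys"
    using walk_cat[OF xs(1) ys(1)] by auto
  show ?thesis using D_le[OF w(1)] w(2) xs ys by simp
qed

lemma D_sym: assumes "fst u \<in> X" "fst v \<in> X" shows "D u v = D v u"
proof -
  have "D v u \<le> D u v" if h: "fst u \<in> X" "fst v \<in> X" for u v
  proof -
    obtain xs where xs: "xs \<in> walks u v" "D u v = wlen cost xs" using D_attained[OF h] by blast
    have w: "rev xs \<in> walks v u" "wlen cost (rev xs) = wlen cost xs" using walk_rev[OF xs(1)] by auto
    show ?thesis using D_le[OF w(1)] w(2) xs by simp
  qed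
  then show ?thesis using assms by (meson order_antisym)
qed

lemma D_sg: assumes "fst u \<in> X" "fst v \<in> X" shows "D u v \<in> add_semigroup_gen G"
proof -
  obtain xs where xs: "xs \<in> walks u v" "D u v = wlen cost xs" using D_attained[OF assms] by blast
  obtain ys where ys: "set ys \<subseteq> G" "wlen cost xs = sum_list ys" using wlen_G[OF xs(1)] by blast
  show ?thesis
  proof (cases "ys = []")
    case True
    then have "D u v = d (fst u) (fst u)" using xs ys d0 assms by simp
    then show ?thesis using assms by (auto simp: G_def intro!: add_semigroup_gen.base)
  next
    case False then show ?thesis using sg_sum_list ys xs by simp
  qed
qed

definition sh :: "int \<Rightarrow> 'b \<times> int \<Rightarrow> 'b \<times> int" where "sh m u = (fst u, snd u + m)"

lemma walk_sh: "xs \<in> walks u v \<Longrightarrow> map (sh m) xs \<in> walks (sh m u) (sh m v) \<and> wlen cost (map (sh m) xs) = wlen cost xs"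
proof -
  assume a: "xs \<in> walks u v"
  have 1: "adj (sh m u) (sh m v)" if "adj u v" for u v using that by (auto simp: adj_def sh_def)
  have 2: "cost (sh m u) (sh m v) = cost u v" for u v by (auto simp: cost_def sh_def)
  have "chainw adj (map (sh m) xs) \<and> wlen cost (map (sh m) xs) = wlen cost xs"
    using chainw_map[of adj adj "sh m" cost cost xs] 1 2 a by (auto simp: walks_def)
  then show ?thesis using a by (auto simp: walks_def hd_map last_map sh_def)
qed

lemma D_sh_le: assumes "fst u \<in> X" "fst v \<in> X" shows "D (sh m u) (sh m v) \<le> D u v"
proof -
  obtain xs where xs: "xs \<in> walks u v" "D u v = wlen cost xs" using D_attained[OF assms] by blast
  have w: "map (sh m) xs \<in> walks (sh m u) (sh m v)" "wlen cost (map (sh m) xs) = wlen cost xs"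
    using walk_sh[OF xs(1)] by auto
  show ?thesis using D_le[OF w(1)] w(2) xs(2) by simp
qed

lemma D_sh: assumes "fst u \<in> X" "fst v \<in> X" shows "D (sh m u) (sh m v) = D u v"
proof -
  have "D (sh (-m) (sh m u)) (sh (-m) (sh m v)) \<le> D (sh m u) (sh m v)"
    using assms by (intro D_sh_le) (auto simp: sh_def)
  moreover have "sh (-m) (sh m w) = w" for w by (auto simp: sh_def)
  ultimately show ?thesis using D_sh_le[OF assms, of m] by auto
qed

lemma D_sh': "a \<in> X \<Longrightarrow> b \<in> X \<Longrightarrow> D (a, k + m) (b, l + m) = D (a, k) (b, l)"
  using D_sh[of "(a,k)" "(b,l)" m] by (simp add: sh_def)

lemma D_edge0: "adj u v \<Longrightarrow> snd u \<noteq> snd v \<Longrightarrow> D u v = 0"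
proof -
  assume a: "adj u v" "snd u \<noteq> snd v"
  have "D u v \<le> 0" using D_le[OF walk_edge[OF a(1)]] a(2) by (simp add: cost_def)
  moreover have "0 \<le> D u v" using a(1) by (intro D_nn) (auto simp: adj_def)
  ultimately show ?thesis by simp
qed

lemma D_zero_repl: assumes "fst u \<in> X" "fst u' \<in> X" "fst v \<in> X" "D u u' = 0" shows "D u v = D u' v"
proof -
  have "D u v \<le> D u u' + D u' v" using D_tri assms by blast
  moreover have "D u' v \<le> D u' u + D u v" using D_tri assms by blast
  moreover have "D u' u = 0" using D_sym assms by simp
  ultimately show ?thesis using assms by simp
qed

end

context uctx begin

primrec phip :: "'b \<Rightarrow> nat \<Rightarrow> 'b \<Rightarrow> real" where
  "phip y 0 a = d a y"
| "phip y (Suc n) a = Min ((\<lambda>c. phip y n (the (f c)) + d a c) ` dom f)"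

primrec phin :: "'b \<Rightarrow> nat \<Rightarrow> 'b \<Rightarrow> real" where
  "phin y 0 a = d a y"
| "phin y (Suc n) a = Min ((\<lambda>c. phin y n c + d a (the (f c))) ` dom f)"

lemma domne: "dom f \<noteq> {}" using fixne by (auto simp: Fix_def)

lemma fthe: "c \<in> dom f \<Longrightarrow> the (f c) \<in> X" using fX by auto

lemma Min_ex: "\<exists>c\<in>dom f. Min (g ` dom f) = g c"
proof -
  have "Min (g ` dom f) \<in> g ` dom f" using Min_in[of "g ` dom f"] findom domne by blast
  then show ?thesis by auto
qed

lemma Min_le': "c \<in> dom f \<Longrightarrow> Min (g ` dom f) \<le> g c"
  using findom by (auto intro: Min_le)

lemma Min_ge': "(\<And>c. c \<in> dom f \<Longrightarrow> t \<le> g c) \<Longrightarrow> t \<le> Min (g ` dom f)"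
  using findom domne by (auto intro: Min.boundedI)

lemma phip_lip: assumes "y \<in> X" "a \<in> X" "b \<in> X" shows "phip y n a \<le> phip y n b + d a b"
proof (cases n)
  case 0 then show ?thesis using dtri[OF assms(2,3,1)] by simp
next
  case (Suc m)
  obtain c where c: "c \<in> dom f" "phip y (Suc m) b = phip y m (the (f c)) + d b c"
    using Min_ex[of "\<lambda>c. phip y m (the (f c)) + d b c"] by auto
  have "phip y (Suc m) a \<le> phip y m (the (f c)) + d a c" using Min_le'[OF c(1)] by simp
  also have "\<dots> \<le> phip y m (the (f c)) + d a b + d b c" using dtri[OF assms(2,3)] c domf by auto
  finally show ?thesis using c Suc by simp
qed

lemma phin_lip: assumes "y \<in> X" "a \<in> X" "b \<in> X" shows "phin y n a \<le> phin y n b + d a b"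
proof (cases n)
  case 0 then show ?thesis using dtri[OF assms(2,3,1)] by simp
next
  case (Suc m)
  obtain c where c: "c \<in> dom f" "phin y (Suc m) b = phin y m c + d b (the (f c))"
    using Min_ex[of "\<lambda>c. phin y m c + d b (the (f c))"] by auto
  have "phin y (Suc m) a \<le> phin y m c + d a (the (f c))" using Min_le'[OF c(1)] by simp
  also have "\<dots> \<le> phin y m c + d a b + d b (the (f c))" using dtri[OF assms(2,3) fthe[OF c(1)]] by auto
  finally show ?thesis using c Suc by simp
qed

lemma phip_nn: "y \<in> X \<Longrightarrow> a \<in> X \<Longrightarrow> 0 \<le> phip y n a"
proof (induction n arbitrary: a)
  case 0 then show ?case using dnn by simp
next
  case (Suc n)
  show ?case using Suc fthe dnn domf by (auto intro!: Min_ge' add_nonneg_nonneg)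
qed

lemma phin_nn: "y \<in> X \<Longrightarrow> a \<in> X \<Longrightarrow> 0 \<le> phin y n a"
proof (induction n arbitrary: a)
  case 0 then show ?case using dnn by simp
next
  case (Suc n)
  show ?case using Suc fthe dnn domf by (auto intro!: Min_ge' add_nonneg_nonneg)
qed

lemma phip_id: assumes "y \<in> X" "a \<in> dom f" shows "phip y (Suc n) a = phip y n (the (f a))"
proof (rule antisym)
  have "phip y (Suc n) a \<le> phip y n (the (f a)) + d a a" using Min_le'[OF assms(2)] by simp
  then show "phip y (Suc n) a \<le> phip y n (the (f a))" using d0 domf assms by auto
next
  show "phip y n (the (f a)) \<le> phip y (Suc n) a"
    unfolding phip.simps
  proof (rule Min_ge')
    fix c assume c: "c \<in> dom f"
    have "phip y n (the (f a)) \<le> phip y n (the (f c)) + d (the (f a)) (the (f c))"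
      using phip_lip assms fthe c by blast
    then show "phip y n (the (f a)) \<le> phip y n (the (f c)) + d a c" using isof[OF assms(2) c] by simp
  qed
qed

lemma phin_id: assumes "y \<in> X" "a \<in> dom f" shows "phin y (Suc n) (the (f a)) = phin y n a"
proof (rule antisym)
  have "phin y (Suc n) (the (f a)) \<le> phin y n a + d (the (f a)) (the (f a))" using Min_le'[OF assms(2)] by simp
  then show "phin y (Suc n) (the (f a)) \<le> phin y n a" using d0 fthe assms by auto
next
  show "phin y n a \<le> phin y (Suc n) (the (f a))"
    unfolding phin.simps
  proof (rule Min_ge')
    fix c assume c: "c \<in> dom f"
    have "phin y n a \<le> phin y n c + d a c"
      using phin_lip assms c domf by blast
    then show "phin y n a \<le> phin y n c + d (the (f a)) (the (f c))" using isof[OF assms(2) c] by simp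
  qed
qed

definition phi :: "'b \<Rightarrow> int \<Rightarrow> 'b \<Rightarrow> real" where
  "phi y k a = (if 0 \<le> k then phip y (nat k) a else phin y (nat (-k)) a)"

lemma phi_id: assumes "y \<in> X" "b \<in> dom f" shows "phi y (j + 1) b = phi y j (the (f b))"
proof (cases "0 \<le> j")
  case True
  then have "nat (j + 1) = Suc (nat j)" by simp
  then show ?thesis using True phip_id[OF assms] by (simp add: phi_def)
next
  case False
  then have e: "nat (- j) = Suc (nat (- (j + 1)))" by simp
  have "phi y j (the (f b)) = phin y (nat (- (j+1))) b" using False phin_id[OF assms] e by (simp add: phi_def)
  moreover have "phi y (j + 1) b = phin y (nat (- (j+1))) b"
    using False by (cases "j + 1 = 0") (auto simp: phi_def)
  ultimately show ?thesis by simp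
qed

lemma phi_lip: "y \<in> X \<Longrightarrow> a \<in> X \<Longrightarrow> b \<in> X \<Longrightarrow> phi y k a \<le> phi y k b + d a b"
  unfolding phi_def using phip_lip phin_lip by auto

lemma phi_nn: "y \<in> X \<Longrightarrow> a \<in> X \<Longrightarrow> 0 \<le> phi y k a"
  unfolding phi_def using phip_nn phin_nn by auto

lemma phi_pot: assumes "y \<in> X" "adj u v"
  shows "phi y (snd u - l) (fst u) \<le> phi y (snd v - l) (fst v) + cost u v"
proof -
  obtain a k b m where uv: "u = (a,k)" "v = (b,m)" by (cases u, cases v)
  have ab: "a \<in> X" "b \<in> X" using assms uv by (auto simp: adj_def)
  consider "m = k" | "m = k - 1" "f a = Some b" | "m = k + 1" "f b = Some a"
    using assms(2) uv by (auto simp: adj_def)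
  then show ?thesis
  proof cases
    case 1 then show ?thesis using uv phi_lip[OF assms(1) ab] by (simp add: cost_def)
  next
    case 2
    have "phi y (k - 1 - l + 1) a = phi y (k - 1 - l) b" using phi_id[OF assms(1), of a "k - 1 - l"] 2 by auto
    then show ?thesis using 2 uv by (simp add: cost_def)
  next
    case 3
    have "phi y (k - l + 1) b = phi y (k - l) a" using phi_id[OF assms(1), of b "k - l"] 3 by auto
    then show ?thesis using 3 uv by (simp add: cost_def algebra_simps)
  qed
qed

lemma D_lower: assumes "x \<in> X" "y \<in> X" shows "phi y (k - l) x \<le> D (x, k) (y, l)"
proof (rule D_ge)
  show "fst (x, k) \<in> X" "fst (y, l) \<in> X" using assms by auto
next
  fix xs assume xs: "xs \<in> walks (x, k) (y, l)"
  have "phi y (snd (hd xs) - l) (fst (hd xs)) \<le> phi y (snd (last xs) - l) (fst (last xs)) + wlen cost xs"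
    using chainw_pot[of adj "\<lambda>w. phi y (snd w - l) (fst w)" cost xs] phi_pot[OF assms(2)] xs
    by (auto simp: walks_def)
  moreover have "phi y 0 y = 0" using d0 assms by (simp add: phi_def)
  ultimately show "phi y (k - l) x \<le> wlen cost xs" using xs by (simp add: walks_def)
qed

lemma D_layer: assumes "x \<in> X" "y \<in> X" shows "D (x, k) (y, k) = d x y"
proof (rule antisym)
  have "adj (x,k) (y,k)" using assms by (simp add: adj_def)
  then show "D (x, k) (y, k) \<le> d x y" using D_le[OF walk_edge] by (fastforce simp: cost_def)
next
  show "d x y \<le> D (x, k) (y, k)" using D_lower[OF assms, of k k] by (simp add: phi_def)
qed

end

context uctx begin

definition fo :: "'b \<Rightarrow> 'b set" where "fo a = {b. \<exists>j>0. pit f j a = Some b}"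
definition r :: "'b \<Rightarrow> nat" where "r a = card (fo a)"
definition Phi :: "'b \<Rightarrow> 'b \<Rightarrow> real" where "Phi x y = Min ((\<lambda>z. d x z + d z y) ` Fix f)"

lemma finFix: "finite (Fix f)"
proof -
  have "Fix f \<subseteq> X" using FixX by auto
  then show ?thesis using finX finite_subset by blast
qed

lemma fo_sub: "fo a \<subseteq> X"
proof
  fix b assume "b \<in> fo a"
  then obtain j where j: "j > 0" "pit f j a = Some b" by (auto simp: fo_def)
  then obtain j' where "j = Suc j'" by (cases j) auto
  then have "b \<in> ran f" using pit_in_ran[of f j' a b] j by simp
  then show "b \<in> X" using ranf by auto
qed

lemma r_le: "r a \<le> card X"
  unfolding r_def using fo_sub finX card_mono by blast

lemma fo_step: assumes "a \<in> dom f" shows "fo a = insert (the (f a)) (fo (the (f a)))"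
proof -
  obtain b where b: "f a = Some b" using assms by auto
  have "pit f (Suc j) a = pit f j b" for j using pit_Suc_first[of f j a] b by simp
  have "(\<exists>j>0. pit f j a = Some c) \<longleftrightarrow> c = b \<or> (\<exists>j>0. pit f j b = Some c)" for c
  proof
    assume "\<exists>j>0. pit f j a = Some c"
    then obtain j where j: "j > 0" "pit f j a = Some c" by blast
    then obtain j' where j': "j = Suc j'" by (cases j) auto
    then have "pit f j' b = Some c" using j \<open>\<And>j. pit f (Suc j) a = pit f j b\<close> by simp
    then show "c = b \<or> (\<exists>j>0. pit f j b = Some c)" by (cases j') auto
  next
    assume "c = b \<or> (\<exists>j>0. pit f j b = Some c)"
    then show "\<exists>j>0. pit f j a = Some c"
    proof
      assume "c = b" then show ?thesis using \<open>\<And>j. pit f (Suc j) a = pit f j b\<close>[of 0] by (intro exI[of _ 1]) simp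
    next
      assume "\<exists>j>0. pit f j b = Some c"
      then obtain j where "j > 0" "pit f j b = Some c" by blast
      then show ?thesis using \<open>\<And>j. pit f (Suc j) a = pit f j b\<close>[of j] by (intro exI[of _ "Suc j"]) simp
    qed
  qed
  then show ?thesis using b by (auto simp: fo_def)
qed

lemma notin_fo: assumes "a \<in> dom f" "a \<notin> Fix f" shows "the (f a) \<notin> fo (the (f a))"
proof
  obtain b where b: "f a = Some b" using assms by auto
  assume "the (f a) \<in> fo (the (f a))"
  then obtain j where j: "j > 0" "pit f j b = Some b" using b by (auto simp: fo_def)
  then obtain j' where j': "j = Suc j'" by (cases j) auto
  have "f b \<noteq> None" using j j' pit_Suc_first[of f j' b] by (auto split: option.splits)
  then have "b \<in> Per f" using j by (auto simp: Per_def)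
  then have "f b = Some b" using perfix by (auto simp: Fix_def)
  then have "a = b" using inj2 b by blast
  then show False using assms b by (auto simp: Fix_def)
qed

lemma r_step: assumes "a \<in> dom f" "a \<notin> Fix f" shows "r a = Suc (r (the (f a)))"
proof -
  have "finite (fo (the (f a)))" using fo_sub finX finite_subset by blast
  then show ?thesis using fo_step[OF assms(1)] notin_fo[OF assms] by (simp add: r_def)
qed

lemma Phi_f: assumes "c \<in> dom f" shows "Phi (the (f c)) y = Phi c y"
proof -
  have "d (the (f c)) z = d c z" if "z \<in> Fix f" for z
    using iso2[of c "the (f c)" z z] assms that Fixf by auto
  then have "(\<lambda>z. d (the (f c)) z + d z y) ` Fix f = (\<lambda>z. d c z + d z y) ` Fix f"
    by (intro image_cong) auto
  then show ?thesis unfolding Phi_def by simp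
qed

lemma Phi_ex: "\<exists>z\<in>Fix f. Phi x y = d x z + d z y"
proof -
  have "Phi x y \<in> (\<lambda>z. d x z + d z y) ` Fix f" unfolding Phi_def using Min_in finFix fixne by blast
  then show ?thesis by auto
qed

lemma Phi_le: "z \<in> Fix f \<Longrightarrow> Phi x y \<le> d x z + d z y"
  unfolding Phi_def using finFix by (auto intro: Min_le)

lemma Phi_tri: assumes "a \<in> X" "c \<in> X" "y \<in> X" shows "Phi a y \<le> d a c + Phi c y"
proof -
  obtain z where z: "z \<in> Fix f" "Phi c y = d c z + d z y" using Phi_ex by blast
  have "Phi a y \<le> d a z + d z y" using Phi_le[OF z(1)] .
  also have "\<dots> \<le> d a c + d c z + d z y" using dtri[OF assms(1,2) FixX[OF z(1)]] by simp
  finally show ?thesis using z by simp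
qed

lemma Phi_fix: "a \<in> Fix f \<Longrightarrow> a \<in> X \<Longrightarrow> Phi a y \<le> d a y"
  using Phi_le[of a a y] d0 by simp

lemma phip_fix: assumes "y \<in> X" "a \<in> Fix f" shows "phip y n a = d a y"
proof (induction n)
  case 0 then show ?case by simp
next
  case (Suc n)
  have "a \<in> dom f" using assms(2) by (auto simp: Fix_def)
  then show ?case using phip_id[OF assms(1)] Fixf[OF assms(2)] Suc by simp
qed

lemma ineq_aux:
  fixes e M n r0 r1 :: real
  assumes "e > 0" "M > 0" "1 + r1 - r0 \<le> M"
  shows "e * ((n + 1 - r0) / M - 1) \<le> e * ((n - r1) / M - 1) + e"
proof -
  have "(n + 1 - r0) / M - (n - r1) / M = (1 + r1 - r0) / M" using assms(2) by (simp add: field_simps)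
  also have "\<dots> \<le> 1" using assms by simp
  finally have "(n + 1 - r0) / M - 1 \<le> (n - r1) / M - 1 + 1" by simp
  then have "e * ((n + 1 - r0) / M - 1) \<le> e * ((n - r1) / M - 1 + 1)"
    using assms(1) by (intro mult_left_mono) auto
  then show ?thesis by (simp add: algebra_simps)
qed

lemma phip_big: assumes y: "y \<in> X"
  shows "a \<in> X \<Longrightarrow> min (Phi a y) (\<delta> * ((real n - real (r a)) / real (card X + 1) - 1)) \<le> phip y n a"
proof (induction n arbitrary: a)
  case 0
  have "0 \<le> real (r a) / real (card X + 1)" by simp
  moreover have "(real 0 - real (r a)) / real (card X + 1) = - (real (r a) / real (card X + 1))" by simp
  ultimately have "(real 0 - real (r a)) / real (card X + 1) - 1 \<le> 0" by linarith
  then have "\<delta> * ((real 0 - real (r a)) / real (card X + 1) - 1) \<le> 0"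
    using dpos by (intro mult_nonneg_nonpos) auto
  moreover have "0 \<le> phip y 0 a" using phip_nn[OF y 0] .
  ultimately show ?case by (simp add: min_le_iff_disj)
next
  case (Suc n)
  let ?M = "real (card X + 1)"
  show ?case
  proof (cases "a \<in> Fix f")
    case True
    have "phip y (Suc n) a = d a y" using phip_fix[OF y True] .
    then show ?thesis using Phi_fix[OF True Suc.prems, of y] by (simp del: phip.simps add: min_le_iff_disj)
  next
    case nf: False
    show ?thesis
      unfolding phip.simps
    proof (rule Min_ge')
      fix c assume c: "c \<in> dom f"
      have cX: "c \<in> X" "the (f c) \<in> X" using c domf fthe by auto
      have IH: "min (Phi (the (f c)) y) (\<delta> * ((real n - real (r (the (f c)))) / ?M - 1)) \<le> phip y n (the (f c))"
        using Suc.IH[OF cX(2)] .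
      have Pf: "Phi (the (f c)) y = Phi c y" using Phi_f[OF c] .
      show "min (Phi a y) (\<delta> * ((real (Suc n) - real (r a)) / ?M - 1)) \<le> phip y n (the (f c)) + d a c"
      proof (cases "c = a")
        case True
        have "r a = Suc (r (the (f a)))" using r_step c True nf by blast
        then have "real (Suc n) - real (r a) = real n - real (r (the (f c)))" using True by simp
        then have "(real (Suc n) - real (r a)) / ?M - 1 = (real n - real (r (the (f c)))) / ?M - 1" by simp
        then show ?thesis using IH Pf True d0[OF Suc.prems] by (simp only:)
      next
        case False
        have dac: "\<delta> \<le> d a c" using dle[OF Suc.prems cX(1)] False by simp
        have "1 + real (r (the (f c))) - real (r a) \<le> ?M" using r_le[of "the (f c)"] by simp
        then have ia0: "\<delta> * ((real n + 1 - real (r a)) / ?M - 1) \<le> \<delta> * ((real n - real (r (the (f c)))) / ?M - 1) + \<delta>"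
          by (intro ineq_aux dpos) auto
        have "real (Suc n) = real n + 1" by simp
        then have ia: "\<delta> * ((real (Suc n) - real (r a)) / ?M - 1) \<le> \<delta> * ((real n - real (r (the (f c)))) / ?M - 1) + \<delta>"
          using ia0 by (simp only:)
        have pt: "Phi a y \<le> d a c + Phi c y" using Phi_tri[OF Suc.prems cX(1) y] .
        show ?thesis
        proof (cases "Phi c y \<le> \<delta> * ((real n - real (r (the (f c)))) / ?M - 1)")
          case True
          then have "Phi c y \<le> phip y n (the (f c))" using IH Pf by simp
          then show ?thesis using pt by (simp add: min_le_iff_disj)
        next
          case False
          then have "\<delta> * ((real n - real (r (the (f c)))) / ?M - 1) \<le> phip y n (the (f c))" using IH Pf by simp
          then have "\<delta> * ((real (Suc n) - real (r a)) / ?M - 1) \<le> phip y n (the (f c)) + d a c" using ia dac by linarith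
          then show ?thesis by (simp only: min_le_iff_disj) simp
        qed
      qed
    qed
  qed
qed

lemma D_far: assumes "x \<in> X" "y \<in> X"
  shows "min (Phi x y) (\<delta> * (real N / real (card X + 1) - 2)) \<le> D (x, int N) (y, 0)"
proof -
  let ?M = "real (card X + 1)"
  have "\<delta> * (real N / ?M - 2) \<le> \<delta> * ((real N - real (r x)) / ?M - 1)"
  proof (intro mult_left_mono)
    have "real (r x) / ?M \<le> 1" using r_le[of x] by simp
    then show "real N / ?M - 2 \<le> (real N - real (r x)) / ?M - 1" by (simp add: diff_divide_distrib)
  qed (use dpos in auto)
  then have "min (Phi x y) (\<delta> * (real N / ?M - 2)) \<le> phip y N x"
    using phip_big[OF assms(2) assms(1), of N] by linarith
  moreover have "phi y (int N - 0) x = phip y N x" by (simp add: phi_def)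
  ultimately show ?thesis using D_lower[OF assms, of "int N" 0] by linarith
qed

lemma phin_zero: assumes "y \<in> X" shows "a \<in> X \<Longrightarrow> phin y n a = 0 \<Longrightarrow> pit f n y = Some a"
proof (induction n arbitrary: a)
  case 0 then show ?case using d0iff assms by simp
next
  case (Suc n)
  obtain c where c: "c \<in> dom f" "phin y (Suc n) a = phin y n c + d a (the (f c))"
    using Min_ex[of "\<lambda>c. phin y n c + d a (the (f c))"] by auto
  have cX: "c \<in> X" "the (f c) \<in> X" using c domf fthe by auto
  have n1: "0 \<le> phin y n c" using phin_nn[OF assms cX(1)] .
  have n2: "0 \<le> d a (the (f c))" using dnn[OF Suc.prems(1) cX(2)] .
  have "phin y n c = 0" "d a (the (f c)) = 0" using c Suc.prems n1 n2 by linarith+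
  then have "pit f n y = Some c" "a = the (f c)" using Suc.IH[OF cX(1)] d0iff[OF Suc.prems(1) cX(2)] by auto
  then show ?case using c by auto
qed

lemma phin_pos: assumes "e \<in> X" "e \<notin> dom f" "j > 0" "a \<in> X" shows "0 < phin e j a"
proof -
  obtain j' where j': "j = Suc j'" using assms(3) by (cases j) auto
  have "pit f j e = None" using j' pit_Suc_first[of f j' e] assms(2) by (auto split: option.splits)
  then have "phin e j a \<noteq> 0" using phin_zero[OF assms(1,4)] by auto
  then show ?thesis using phin_nn[OF assms(1,4), of j] by simp
qed

end

context uctx begin

lemma D_vert0: assumes "z \<in> Fix f" shows "D (z, k) (z, k + int n) = 0"
proof (induction n)
  case 0 then show ?case using D_refl FixX[OF assms] by simp
next
  case (Suc n)
  have zX: "z \<in> X" using FixX[OF assms] .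
  have "adj (z, k + int n) (z, k + int (Suc n))" using zX Fixf[OF assms] by (auto simp: adj_def)
  then have "D (z, k + int n) (z, k + int (Suc n)) = 0" by (intro D_edge0) auto
  then have "D (z, k) (z, k + int (Suc n)) \<le> 0" using D_tri[of "(z,k)" "(z, k + int n)" "(z, k + int (Suc n))"] Suc zX by simp
  then show ?case using D_nn[of "(z,k)" "(z, k + int (Suc n))"] zX by simp
qed

lemma D_vert: assumes "z \<in> Fix f" shows "D (z, k) (z, l) = 0"
proof (cases "k \<le> l")
  case True then show ?thesis using D_vert0[OF assms, of k "nat (l - k)"] by simp
next
  case False
  then have "D (z, l) (z, k) = 0" using D_vert0[OF assms, of l "nat (k - l)"] by simp
  then show ?thesis using D_sym FixX[OF assms] by simp
qed

lemma D_pos_aux: assumes "a \<in> X" "e \<in> X" "e \<notin> dom f" "k < l" shows "0 < D (a, k) (e, l)"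
proof -
  have "phi e (k - l) a = phin e (nat (l - k)) a" using assms(4) by (simp add: phi_def)
  moreover have "0 < phin e (nat (l - k)) a" using phin_pos[OF assms(2,3) _ assms(1)] assms(4) by simp
  ultimately show ?thesis using D_lower[OF assms(1,2), of k l] by simp
qed

end

locale uctx2 = uctx +
  fixes N :: nat and \<nu> :: "'a \<times> nat \<Rightarrow> 'a"
  assumes N1: "N \<ge> 1"
    and nu_inj: "inj_on \<nu> ((X - dom f) \<times> {1..N})"
    and nu_X: "\<nu> ` ((X - dom f) \<times> {1..N}) \<inter> X = {}"
begin

definition E where "E = X - dom f"
definition P where "P = E \<times> {1..N}"
definition Y where "Y = X \<union> \<nu> ` P"
definition nui where "nui u = the_inv_into P \<nu> u"

definition f' :: "'a \<rightharpoonup> 'a" where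
  "f' u = (if u \<in> X then (case f u of Some w \<Rightarrow> Some w | None \<Rightarrow> Some (\<nu> (u, 1)))
     else if u \<in> \<nu> ` P \<and> snd (nui u) < N then Some (\<nu> (fst (nui u), Suc (snd (nui u)))) else None)"

definition vert :: "'a \<Rightarrow> 'a \<times> int" where
  "vert u = (if u \<in> X then (u, 0) else (fst (nui u), int (snd (nui u))))"

definition d' :: "'a \<Rightarrow> 'a \<Rightarrow> real" where "d' u v = D (vert u) (vert v)"

lemma nuinj: "inj_on \<nu> P" using nu_inj by (simp add: P_def E_def)
lemma nui_nu: "p \<in> P \<Longrightarrow> nui (\<nu> p) = p"
  unfolding nui_def using nuinj by (simp add: the_inv_into_f_f)
lemma nu_notX: "p \<in> P \<Longrightarrow> \<nu> p \<notin> X" using nu_X by (auto simp: P_def E_def)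
lemma EX: "e \<in> E \<Longrightarrow> e \<in> X" by (simp add: E_def)
lemma Edom: "e \<in> E \<Longrightarrow> e \<notin> dom f" by (simp add: E_def)
lemma finE: "finite E" using finX by (simp add: E_def)
lemma finP: "finite P" using finE by (simp add: P_def)
lemma finY: "finite Y" using finX finP by (simp add: Y_def)
lemma XY: "X \<subseteq> Y" by (auto simp: Y_def)

lemma vert_X: "x \<in> X \<Longrightarrow> vert x = (x, 0)" by (simp add: vert_def)
lemma vert_nu: "(e, t) \<in> P \<Longrightarrow> vert (\<nu> (e, t)) = (e, int t)"
  using nu_notX nui_nu by (simp add: vert_def)
lemma vert_fst: "u \<in> Y \<Longrightarrow> fst (vert u) \<in> X"
  unfolding Y_def using vert_X vert_nu EX by (auto simp: P_def)

lemma f'_dom: "x \<in> dom f \<Longrightarrow> f' x = f x"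
  using domf by (auto simp: f'_def)
lemma f'_E: "e \<in> E \<Longrightarrow> f' e = Some (\<nu> (e, 1))"
  unfolding E_def f'_def by (auto simp: domIff)
lemma f'_nu: "(e, t) \<in> P \<Longrightarrow> f' (\<nu> (e, t)) = (if t < N then Some (\<nu> (e, Suc t)) else None)"
  using nu_notX nui_nu by (auto simp: f'_def)
lemma f'_out: "u \<notin> Y \<Longrightarrow> f' u = None"
  by (auto simp: f'_def Y_def)

lemma Y_cases: "u \<in> Y \<Longrightarrow> (u \<in> X \<Longrightarrow> Q) \<Longrightarrow> (\<And>e t. (e, t) \<in> P \<Longrightarrow> u = \<nu> (e, t) \<Longrightarrow> Q) \<Longrightarrow> Q"
  unfolding Y_def by auto

lemma X_cases: "u \<in> X \<Longrightarrow> (u \<in> dom f \<Longrightarrow> Q) \<Longrightarrow> (u \<in> E \<Longrightarrow> Q) \<Longrightarrow> Q"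
  unfolding E_def by auto

lemma map_le_f': "f \<subseteq>\<^sub>m f'"
  unfolding map_le_def using f'_dom by auto

lemma f'_Y: "f' u = Some v \<Longrightarrow> u \<in> Y \<and> v \<in> Y"
proof -
  assume a: "f' u = Some v"
  then have uY: "u \<in> Y" using f'_out by fastforce
  show ?thesis
  proof (rule Y_cases[OF uY])
    assume uX: "u \<in> X"
    show ?thesis
    proof (rule X_cases[OF uX])
      assume "u \<in> dom f" then show ?thesis using a f'_dom fX uY XY by auto
    next
      assume "u \<in> E" then show ?thesis using a f'_E N1 uY by (auto simp: Y_def P_def)
    qed
  next
    fix e t assume "(e, t) \<in> P" "u = \<nu> (e, t)"
    then show ?thesis using a f'_nu uY by (auto simp: Y_def P_def split: if_splits)
  qed
qed

lemma vert_step: assumes "f' u = Some v" shows "D (vert v) (sh 1 (vert u)) = 0"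
proof -
  have uY: "u \<in> Y" using f'_Y assms by blast
  show ?thesis
  proof (rule Y_cases[OF uY])
    assume uX: "u \<in> X"
    show ?thesis
    proof (rule X_cases[OF uX])
      assume ud: "u \<in> dom f"
      then have fv: "f u = Some v" using assms f'_dom by simp
      then have vX: "v \<in> X" using fX by blast
      have "adj (u, 1) (v, 0)" using uX vX fv by (simp add: adj_def)
      then have "D (u, 1) (v, 0) = 0" by (intro D_edge0) auto
      then show ?thesis using D_sym[of "(u,1)" "(v,0)"] uX vX by (simp add: vert_X sh_def)
    next
      assume ue: "u \<in> E"
      then have "v = \<nu> (u, 1)" using assms f'_E by simp
      moreover have "(u, 1) \<in> P" using ue N1 by (simp add: P_def)
      ultimately show ?thesis using vert_nu uX D_refl ue EX by (simp add: vert_X sh_def)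
    qed
  next
    fix e t assume p: "(e, t) \<in> P" "u = \<nu> (e, t)"
    then have tN: "t < N" "v = \<nu> (e, Suc t)" using assms f'_nu by (auto split: if_splits)
    then have "(e, Suc t) \<in> P" using p by (simp add: P_def)
    moreover have "D (e, 1 + int t) (e, int t + 1) = 0" using D_refl[of "(e, int t + 1)"] EX p
      by (simp add: add.commute P_def)
    ultimately show ?thesis using vert_nu p tN by (simp add: sh_def P_def)
  qed
qed

lemma d'_iso: assumes "f' u = Some u'" "f' v = Some v'" shows "d' u' v' = d' u v"
proof -
  have Y: "u \<in> Y" "u' \<in> Y" "v \<in> Y" "v' \<in> Y" using f'_Y assms by blast+
  have F: "fst (vert u) \<in> X" "fst (vert u') \<in> X" "fst (vert v) \<in> X" "fst (vert v') \<in> X"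
    using vert_fst Y by blast+
  have Fs: "fst (sh 1 (vert u)) \<in> X" "fst (sh 1 (vert v)) \<in> X" using F by (auto simp: sh_def)
  have "D (vert u') (vert v') = D (sh 1 (vert u)) (vert v')"
    using D_zero_repl[OF F(2) Fs(1) F(4) vert_step[OF assms(1)]] .
  also have "\<dots> = D (vert v') (sh 1 (vert u))" using D_sym F Fs by blast
  also have "\<dots> = D (sh 1 (vert v)) (sh 1 (vert u))"
    using D_zero_repl[OF F(4) Fs(2) Fs(1) vert_step[OF assms(2)]] .
  also have "\<dots> = D (vert v) (vert u)" using D_sh F by blast
  also have "\<dots> = D (vert u) (vert v)" using D_sym F by blast
  finally show ?thesis by (simp add: d'_def)
qed

lemma d'_X: "a \<in> X \<Longrightarrow> b \<in> X \<Longrightarrow> d' a b = d a b"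
  using D_layer by (simp add: d'_def vert_X)

lemma d'_pos: assumes "u \<in> Y" "v \<in> Y" "u \<noteq> v" shows "0 < d' u v"
proof -
  have XE: "0 < D (a, 0) (e, int t)" if "a \<in> X" "(e, t) \<in> P" for a e t
    using D_pos_aux[of a e 0 "int t"] that EX Edom by (auto simp: P_def)
  have FF: "fst (vert u) \<in> X" "fst (vert v) \<in> X" using vert_fst assms by auto
  show ?thesis
  proof (rule Y_cases[OF assms(1)])
    assume uX: "u \<in> X"
    show ?thesis
    proof (rule Y_cases[OF assms(2)])
      assume vX: "v \<in> X"
      then show ?thesis using d'_X uX dle assms(3) dpos by (metis less_le_trans)
    next
      fix e t assume "(e, t) \<in> P" "v = \<nu> (e, t)"
      then show ?thesis using XE uX by (simp add: d'_def vert_X vert_nu)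
    qed
  next
    fix e t assume et: "(e, t) \<in> P" "u = \<nu> (e, t)"
    show ?thesis
    proof (rule Y_cases[OF assms(2)])
      assume vX: "v \<in> X"
      then show ?thesis using XE[OF vX et(1)] D_sym FF et by (simp add: d'_def vert_X vert_nu)
    next
      fix e' t' assume et': "(e', t') \<in> P" "v = \<nu> (e', t')"
      have eX: "e \<in> X" "e' \<in> X" "e \<notin> dom f" "e' \<notin> dom f" using et et' EX Edom by (auto simp: P_def)
      have dv: "d' u v = D (e, int t) (e', int t')" using et et' by (simp add: d'_def vert_nu)
      consider "t = t'" | "t < t'" | "t' < t" by linarith
      then show ?thesis
      proof cases
        case 1
        then have "e \<noteq> e'" using assms(3) et et' by auto
        then show ?thesis using dv 1 D_layer eX dle dpos by (metis less_le_trans)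
      next
        case 2 then show ?thesis using dv D_pos_aux[OF eX(1,2,4)] by simp
      next
        case 3
        then have "0 < D (e', int t') (e, int t)" using D_pos_aux[OF eX(2,1,3)] by simp
        then show ?thesis using dv D_sym eX by simp
      qed
    qed
  qed
qed

lemma metric_Y: "metric_on Y d'"
  unfolding metric_on_def
proof (intro conjI ballI)
  fix x y assume xy: "x \<in> Y" "y \<in> Y"
  have F: "fst (vert x) \<in> X" "fst (vert y) \<in> X" using vert_fst xy by auto
  show "0 \<le> d' x y" using D_nn F by (simp add: d'_def)
  show "(d' x y = 0) = (x = y)"
  proof
    assume "d' x y = 0" then show "x = y" using d'_pos[OF xy] by (cases "x = y") auto
  next
    assume "x = y" then show "d' x y = 0" using D_refl[OF F(1)] by (simp add: d'_def)
  qed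
  show "d' x y = d' y x" using D_sym F by (simp add: d'_def)
next
  fix x y z assume xyz: "x \<in> Y" "y \<in> Y" "z \<in> Y"
  have F: "fst (vert x) \<in> X" "fst (vert y) \<in> X" "fst (vert z) \<in> X" using vert_fst xyz by auto
  show "d' x z \<le> d' x y + d' y z" using D_tri[OF F] by (simp add: d'_def)
qed

lemma iso_Y: "partial_isometry Y d' f'"
  unfolding partial_isometry_def
proof (intro conjI)
  have "dom f' \<subseteq> Y" using f'_Y by blast
  then show "finite (dom f')" "dom f' \<subseteq> Y" using finY finite_subset by auto
  show "ran f' \<subseteq> Y" using f'_Y by (auto simp: ran_def)
  show "\<forall>x\<in>dom f'. \<forall>y\<in>dom f'. d' (the (f' x)) (the (f' y)) = d' x y"
    using d'_iso by auto
  show "inj_on f' (dom f')"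
  proof (rule inj_onI)
    fix x y assume xy: "x \<in> dom f'" "y \<in> dom f'" "f' x = f' y"
    then obtain v where v: "f' x = Some v" "f' y = Some v" by auto
    have "d' x y = d' v v" using d'_iso[OF v] by simp
    moreover have Y: "v \<in> Y" "x \<in> Y" "y \<in> Y" using f'_Y v by blast+
    moreover have "d' v v = 0" using D_refl[OF vert_fst[OF Y(1)]] by (simp add: d'_def)
    ultimately have "d' x y = 0" by simp
    then show "x = y" using d'_pos[OF Y(2,3)] by (cases "x = y") auto
  qed
qed

end

context uctx2 begin

lemma P_nu_notX: "(e, t) \<in> P \<Longrightarrow> \<nu> (e, t) \<notin> X" using nu_notX by blast

lemma back_X: "pit f' n x = Some y \<Longrightarrow> x \<in> X \<Longrightarrow> y \<in> X \<Longrightarrow> pit f n x = Some y"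
proof (induction n arbitrary: y)
  case 0 then show ?case by simp
next
  case (Suc n)
  obtain w where w: "pit f' n x = Some w" "f' w = Some y" using pit_SucE[OF Suc.prems(1)] by blast
  have wY: "w \<in> Y" using f'_Y w(2) by blast
  show ?case
  proof (rule Y_cases[OF wY])
    assume wX: "w \<in> X"
    show ?thesis
    proof (rule X_cases[OF wX])
      assume wd: "w \<in> dom f"
      then have "f w = Some y" using w(2) f'_dom by simp
      then show ?thesis using Suc.IH[OF w(1) Suc.prems(2) wX] by simp
    next
      assume we: "w \<in> E"
      then have "y = \<nu> (w, 1)" "(w, 1) \<in> P" using w(2) f'_E N1 by (auto simp: P_def)
      then show ?thesis using Suc.prems(3) P_nu_notX by blast
    qed
  next
    fix e t assume et: "(e, t) \<in> P" "w = \<nu> (e, t)"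
    then have "t < N" "y = \<nu> (e, Suc t)" using w(2) f'_nu by (auto split: if_splits)
    then have "(e, Suc t) \<in> P" "y = \<nu> (e, Suc t)" using et by (auto simp: P_def)
    then show ?thesis using Suc.prems(3) P_nu_notX by blast
  qed
qed

lemma nu_orbit: "(e, t) \<in> P \<Longrightarrow> pit f' n (\<nu> (e, t)) = Some y \<Longrightarrow> (e, t + n) \<in> P \<and> y = \<nu> (e, t + n)"
proof (induction n arbitrary: y)
  case 0 then show ?case by simp
next
  case (Suc n)
  obtain w where w: "pit f' n (\<nu> (e, t)) = Some w" "f' w = Some y" using pit_SucE[OF Suc.prems(2)] by blast
  have IH: "(e, t + n) \<in> P" "w = \<nu> (e, t + n)" using Suc.IH[OF Suc.prems(1) w(1)] by auto
  then have "t + n < N" "y = \<nu> (e, Suc (t + n))" using w(2) f'_nu by (auto split: if_splits)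
  then show ?case using IH by (auto simp: P_def)
qed

lemma Per_eq: "Per f' = Per f"
proof
  show "Per f \<subseteq> Per f'"
  proof
    fix x assume "x \<in> Per f"
    then obtain n where n: "x \<in> dom f" "n > 0" "pit f n x = Some x" by (auto simp: Per_def)
    then have "pit f' n x = Some x" using pit_mono[OF map_le_f'] by blast
    moreover have "x \<in> dom f'" using n(1) f'_dom[OF n(1)] by auto
    ultimately show "x \<in> Per f'" using n(2) by (auto simp: Per_def)
  qed
next
  show "Per f' \<subseteq> Per f"
  proof
    fix x assume "x \<in> Per f'"
    then obtain n where n: "x \<in> dom f'" "n > 0" "pit f' n x = Some x" by (auto simp: Per_def)
    have xY: "x \<in> Y" using n(1) f'_Y by blast
    show "x \<in> Per f"
    proof (rule Y_cases[OF xY])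
      assume xX: "x \<in> X"
      then have p: "pit f n x = Some x" using back_X n(3) by blast
      obtain n' where n': "n = Suc n'" using n(2) by (cases n) auto
      have "f x \<noteq> None" using p n' pit_Suc_first[of f n' x] by (auto split: option.splits)
      then show ?thesis using p n(2) by (auto simp: Per_def)
    next
      fix e t assume et: "(e, t) \<in> P" "x = \<nu> (e, t)"
      then have "(e, t + n) \<in> P" "\<nu> (e, t) = \<nu> (e, t + n)" using nu_orbit n(3) by auto
      then have "(e, t) = (e, t + n)" using nuinj et(1) unfolding inj_on_def by blast
      then show ?thesis using n(2) by simp
    qed
  qed
qed

lemma Fix_eq: "Fix f' = Fix f"
proof
  show "Fix f \<subseteq> Fix f'" using map_le_f' unfolding Fix_def map_le_def by force
  show "Fix f' \<subseteq> Fix f" using Fix_sub_Per[of f'] Per_eq perfix by blast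
qed

lemma pit_walk: "x \<in> X \<Longrightarrow> n \<le> N \<Longrightarrow> \<exists>w. pit f' n x = Some w \<and> w \<in> Y \<and> D (vert w) (x, int n) = 0 \<and>
    (w \<in> X \<or> (\<exists>e t. (e, t) \<in> P \<and> w = \<nu> (e, t) \<and> t \<le> n))"
proof (induction n)
  case 0 then show ?case using XY D_refl by (auto simp: vert_X)
next
  case (Suc n)
  then obtain w where w: "pit f' n x = Some w" "w \<in> Y" "D (vert w) (x, int n) = 0"
    "w \<in> X \<or> (\<exists>e t. (e, t) \<in> P \<and> w = \<nu> (e, t) \<and> t \<le> n)" by auto
  obtain w' where w': "f' w = Some w'" "w' \<in> X \<or> (\<exists>e t. (e, t) \<in> P \<and> w' = \<nu> (e, t) \<and> t \<le> Suc n)"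
  proof (cases "w \<in> X")
    case wX: True
    show ?thesis
    proof (rule X_cases[OF wX])
      assume "w \<in> dom f"
      then obtain v where v: "f w = Some v" by auto
      then have "f' w = Some v" "v \<in> X" using f'_dom[OF \<open>w \<in> dom f\<close>] fX by auto
      then show ?thesis using that by blast
    next
      assume we: "w \<in> E"
      then have "(w, 1) \<in> P" using N1 by (simp add: P_def)
      then show ?thesis using that[of "\<nu> (w, 1)"] f'_E[OF we] by auto
    qed
  next
    case False
    then obtain e t where et: "(e, t) \<in> P" "w = \<nu> (e, t)" "t \<le> n" using w(4) by auto
    then have "t < N" using Suc.prems by simp
    then have "(e, Suc t) \<in> P" "f' w = Some (\<nu> (e, Suc t))" using et f'_nu by (auto simp: P_def)
    then show ?thesis using that[of "\<nu> (e, Suc t)"] et(3) by auto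
  qed
  have w'Y: "w' \<in> Y" using f'_Y w'(1) by blast
  have F: "fst (vert w') \<in> X" "fst (vert w) \<in> X" "x \<in> X" using vert_fst w'Y w(2) Suc.prems by auto
  have "D (vert w') (x, int (Suc n)) \<le> D (vert w') (sh 1 (vert w)) + D (sh 1 (vert w)) (x, int (Suc n))"
    using D_tri[of "vert w'" "sh 1 (vert w)" "(x, int (Suc n))"] F by (simp add: sh_def)
  moreover have "D (vert w') (sh 1 (vert w)) = 0" using vert_step[OF w'(1)] .
  moreover have "D (sh 1 (vert w)) (x, int (Suc n)) = D (vert w) (x, int n)"
    using D_sh[of "vert w" "(x, int n)" 1] F by (simp add: sh_def add.commute)
  ultimately have "D (vert w') (x, int (Suc n)) \<le> 0" using w(3) by simp
  moreover have "0 \<le> D (vert w') (x, int (Suc n))" using D_nn F by simp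
  ultimately show ?case using w w' w'Y by auto
qed

lemma d'_far: assumes "x \<in> X" "y \<in> X"
  shows "pit f' N x \<noteq> None \<and> the (pit f' N x) \<in> Y \<and>
    min (Phi x y) (\<delta> * (real N / real (card X + 1) - 2)) \<le> d' (the (pit f' N x)) y"
proof -
  obtain w where w: "pit f' N x = Some w" "w \<in> Y" "D (vert w) (x, int N) = 0" using pit_walk[OF assms(1)] by blast
  have F: "fst (vert w) \<in> X" using vert_fst w(2) by blast
  have "d' w y = D (x, int N) (y, 0)" using D_zero_repl[OF F _ _ w(3)] assms by (simp add: d'_def vert_X)
  then show ?thesis using D_far[OF assms] w by simp
qed

lemma d'_sg: "u \<in> Y \<Longrightarrow> v \<in> Y \<Longrightarrow> d' u v \<in> add_semigroup_gen G"
  using D_sg vert_fst by (simp add: d'_def)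

lemma d'_fix: assumes "y \<in> Y" shows "\<exists>x\<in>X. \<forall>z\<in>Fix f. d' z y = d z x"
proof (rule Y_cases[OF assms])
  assume "y \<in> X" then show ?thesis using d'_X FixX by blast
next
  fix e t assume et: "(e, t) \<in> P" "y = \<nu> (e, t)"
  have eX: "e \<in> X" using et EX by (auto simp: P_def)
  have "d' z y = d z e" if z: "z \<in> Fix f" for z
  proof -
    have zX: "z \<in> X" using FixX z by blast
    have "D (z, 0) (e, int t) = D (z, int t) (e, int t)"
      using D_zero_repl[of "(z,0)" "(z, int t)" "(e, int t)"] D_vert[OF z, of 0 "int t"] zX eX by simp
    then show ?thesis using D_layer zX eX et vert_nu by (simp add: d'_def vert_X)
  qed
  then show ?thesis using eX by blast
qed

end

lemma exists_fresh:
  fixes S :: "'c set" and X :: "'b set"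
  assumes "finite S" "finite X" "infinite (UNIV :: 'b set)"
  shows "\<exists>g. inj_on g S \<and> g ` S \<inter> X = {}"
proof -
  have "infinite (UNIV - X)" using Diff_infinite_finite[OF assms(2,3)] .
  then obtain T where T: "T \<subseteq> UNIV - X" "finite T" "card T = card S"
    using infinite_arbitrarily_large[of "UNIV - X" "card S"] by blast
  have "card S = card T" using T(3) by simp
  then obtain g where "bij_betw g S T" using finite_same_card_bij[OF assms(1) T(2)] by blast
  then show ?thesis using T unfolding bij_betw_def by blast
qed

theorem unroll:
  fixes X :: "'b set" and d :: "'b \<Rightarrow> 'b \<Rightarrow> real" and f :: "'b \<rightharpoonup> 'b"
  assumes inf: "infinite (UNIV :: 'b set)"
    and u: "uctx X d f \<delta>" and N1: "N \<ge> 1"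
  shows "\<exists>Y d' f'. finite Y \<and> X \<subseteq> Y \<and> metric_on Y d' \<and> (\<forall>a\<in>X. \<forall>b\<in>X. d' a b = d a b) \<and>
    partial_isometry Y d' f' \<and> f \<subseteq>\<^sub>m f' \<and> Per f' = Per f \<and> Fix f' = Fix f \<and>
    (\<forall>x\<in>X. pit f' N x \<noteq> None \<and> the (pit f' N x) \<in> Y) \<and>
    (\<forall>u\<in>Y. \<forall>v\<in>Y. d' u v \<in> add_semigroup_gen {d a b | a b. a \<in> X \<and> b \<in> X}) \<and>
    (\<forall>y\<in>Y. \<exists>x\<in>X. \<forall>z\<in>Fix f. d' z y = d z x) \<and>
    (\<forall>x\<in>X. \<forall>y\<in>X. min (Min ((\<lambda>z. d x z + d z y) ` Fix f)) (\<delta> * (real N / real (card X + 1) - 2))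
        \<le> d' (the (pit f' N x)) y)"
proof -
  interpret uctx X d f \<delta> by (rule u)
  have fs: "finite ((X - dom f) \<times> {1..N})" using finX by simp
  obtain \<nu> :: "'b \<times> nat \<Rightarrow> 'b" where nu: "inj_on \<nu> ((X - dom f) \<times> {1..N})" "\<nu> ` ((X - dom f) \<times> {1..N}) \<inter> X = {}"
    using exists_fresh[OF fs finX inf] by blast
  interpret u2: uctx2 X d f \<delta> N \<nu>
    by (rule uctx2.intro[OF u], rule uctx2_axioms.intro) (use N1 nu in auto)
  have far: "\<forall>x\<in>X. \<forall>y\<in>X. min (Min ((\<lambda>z. d x z + d z y) ` Fix f)) (\<delta> * (real N / real (card X + 1) - 2))
        \<le> u2.d' (the (pit u2.f' N x)) y"
    using u2.d'_far unfolding Phi_def by blast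
  have pitd: "\<forall>x\<in>X. pit u2.f' N x \<noteq> None \<and> the (pit u2.f' N x) \<in> u2.Y"
    using u2.d'_far by blast
  have sg: "\<forall>u\<in>u2.Y. \<forall>v\<in>u2.Y. u2.d' u v \<in> add_semigroup_gen {d a b | a b. a \<in> X \<and> b \<in> X}"
    using u2.d'_sg unfolding G_def by blast
  show ?thesis
    apply (rule exI[of _ u2.Y], rule exI[of _ u2.d'], rule exI[of _ u2.f'])
    apply (intro conjI)
    using u2.finY u2.XY u2.metric_Y u2.iso_Y u2.map_le_f' u2.Per_eq u2.Fix_eq pitd sg far
    apply (simp_all)
    using u2.d'_X apply blast
    using u2.d'_fix apply blast
    done
qed

definition lp :: "('a \<rightharpoonup> 'a) \<Rightarrow> ('a + nat \<rightharpoonup> 'a + nat)" where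
  "lp p u = (case u of Inl a \<Rightarrow> map_option Inl (p a) | Inr _ \<Rightarrow> None)"

definition d0 :: "('a \<Rightarrow> 'a \<Rightarrow> real) \<Rightarrow> 'a + nat \<Rightarrow> 'a + nat \<Rightarrow> real" where
  "d0 dA u v = (case (u, v) of (Inl a, Inl b) \<Rightarrow> dA a b | _ \<Rightarrow> 0)"

lemma lp_Inl: "lp p (Inl a) = map_option Inl (p a)" by (simp add: lp_def)
lemma lp_Inr: "lp p (Inr k) = None" by (simp add: lp_def)

lemma pit_lp_Inl: "pit (lp p) n (Inl a) = map_option Inl (pit p n a)"
proof (induction n)
  case 0 then show ?case by simp
next
  case (Suc n) then show ?case by (cases "pit p n a") (auto simp: lp_Inl)
qed

lemma pit_lp_Inr: "pit (lp p) (Suc n) (Inr k) = None"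
  using pit_Suc_first[of "lp p" n "Inr k"] by (simp add: lp_Inr)

lemma dom_lp: "dom (lp p) = Inl ` dom p"
proof
  show "dom (lp p) \<subseteq> Inl ` dom p"
  proof
    fix u :: "'a + nat" assume "u \<in> dom (lp p)"
    then show "u \<in> Inl ` dom p" by (cases u) (auto simp: lp_Inl lp_Inr dom_def)
  qed
  show "Inl ` dom p \<subseteq> dom (lp p)" by (auto simp: lp_Inl)
qed

lemma Fix_lp: "Fix (lp p) = Inl ` Fix p"
proof
  show "Fix (lp p) \<subseteq> Inl ` Fix p"
  proof
    fix u :: "'a + nat" assume "u \<in> Fix (lp p)"
    then show "u \<in> Inl ` Fix p" by (cases u) (auto simp: Fix_def lp_Inl lp_Inr)
  qed
  show "Inl ` Fix p \<subseteq> Fix (lp p)" by (auto simp: Fix_def lp_Inl)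
qed

lemma Per_lp: "Per (lp p) = Inl ` Per p"
proof
  show "Per (lp p) \<subseteq> Inl ` Per p"
  proof
    fix u :: "'a + nat" assume u: "u \<in> Per (lp p)"
    then obtain a where a: "u = Inl a" "a \<in> dom p" using dom_lp[of p] by (auto simp: Per_def)
    then obtain n where "n > 0" "pit (lp p) n u = Some u" using u by (auto simp: Per_def)
    then have "pit p n a = Some a" using a pit_lp_Inl[of p n a] by auto
    then show "u \<in> Inl ` Per p" using a \<open>n > 0\<close> by (auto simp: Per_def)
  qed
  show "Inl ` Per p \<subseteq> Per (lp p)"
  proof
    fix u :: "'a + nat" assume "u \<in> Inl ` Per p"
    then obtain a n where "u = Inl a" "a \<in> dom p" "n > 0" "pit p n a = Some a" by (auto simp: Per_def)
    then show "u \<in> Per (lp p)" using pit_lp_Inl[of p n a] dom_lp[of p] by (auto simp: Per_def)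
  qed
qed

lemma metric_d0: "metric_on A dA \<Longrightarrow> metric_on (Inl ` A) (d0 dA)"
  unfolding metric_on_def d0_def by auto

lemma iso_lp: assumes "partial_isometry A dA p" shows "partial_isometry (Inl ` A) (d0 dA) (lp p)"
  unfolding partial_isometry_def
proof (intro conjI)
  have dp: "finite (dom p)" "dom p \<subseteq> A" "ran p \<subseteq> A" "inj_on p (dom p)"
    "\<forall>x\<in>dom p. \<forall>y\<in>dom p. dA (the (p x)) (the (p y)) = dA x y"
    using assms unfolding partial_isometry_def by auto
  show "finite (dom (lp p))" "dom (lp p) \<subseteq> Inl ` A" using dp by (auto simp: dom_lp)
  show "ran (lp p) \<subseteq> Inl ` A"
  proof
    fix v :: "'a + nat" assume "v \<in> ran (lp p)"
    then obtain u where "lp p u = Some v" by (auto simp: ran_def)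
    then obtain a b where "u = Inl a" "p a = Some b" "v = Inl b" by (cases u) (auto simp: lp_Inl lp_Inr)
    then show "v \<in> Inl ` A" using dp(3) by (auto simp: ran_def)
  qed
  show "inj_on (lp p) (dom (lp p))"
  proof (rule inj_onI)
    fix x y assume xy: "x \<in> dom (lp p)" "y \<in> dom (lp p)" "lp p x = lp p y"
    then obtain a b where ab: "x = Inl a" "y = Inl b" "a \<in> dom p" "b \<in> dom p" by (auto simp: dom_lp)
    then have "p a = p b" using xy(3) by (auto simp: lp_Inl option.map_sel domD)
    then show "x = y" using dp(4) ab unfolding inj_on_def by auto
  qed
  show "\<forall>x\<in>dom (lp p). \<forall>y\<in>dom (lp p). d0 dA (the (lp p x)) (the (lp p y)) = d0 dA x y"
  proof (intro ballI)
    fix x y assume xy: "x \<in> dom (lp p)" "y \<in> dom (lp p)"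
    then obtain a b where ab: "x = Inl a" "y = Inl b" "a \<in> dom p" "b \<in> dom p" by (auto simp: dom_lp)
    then obtain a' b' where ab': "p a = Some a'" "p b = Some b'" by auto
    have "dA (the (p a)) (the (p b)) = dA a b" using dp(5) ab(3,4) by blast
    then show "d0 dA (the (lp p x)) (the (lp p y)) = d0 dA x y"
      using ab ab' by (auto simp: lp_Inl d0_def)
  qed
qed

lemma lp_le: "lp p \<subseteq>\<^sub>m g \<Longrightarrow> x \<in> dom p \<Longrightarrow> g (Inl x) = map_option Inl (p x)"
  unfolding map_le_def by (auto simp: dom_lp lp_Inl)

lemma reduced_cons2:
  assumes "reduced_word w" "w = [] \<or> fst (hd w) = T" "K \<noteq> 0" "L \<noteq> 0"
  shows "reduced_word ((T, K) # (S, L) # w)"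
  unfolding reduced_word_def
proof (intro conjI allI impI)
  fix i assume i: "i < length ((T, K) # (S, L) # w)"
  show "snd (((T, K) # (S, L) # w) ! i) \<noteq> 0"
  proof (cases i)
    case 0 then show ?thesis using assms by simp
  next
    case (Suc j) then show ?thesis using assms i unfolding reduced_word_def by (cases j) auto
  qed
next
  fix i assume i: "Suc i < length ((T, K) # (S, L) # w)"
  show "fst (((T, K) # (S, L) # w) ! i) \<noteq> fst (((T, K) # (S, L) # w) ! Suc i)"
  proof (cases i)
    case 0 then show ?thesis by simp
  next
    case (Suc j)
    show ?thesis
    proof (cases j)
      case 0
      then have "w \<noteq> []" using i Suc by auto
      then have "fst (w ! 0) = T" using assms(2) by (simp add: hd_conv_nth)
      then show ?thesis using Suc 0 by simp
    next
      case (Suc k)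
      then show ?thesis using assms(1) i \<open>i = Suc j\<close> unfolding reduced_word_def by auto
    qed
  qed
qed

lemma eval_word_mono:
  "(\<forall>g\<in>set w. 0 < snd g) \<Longrightarrow> pb \<subseteq>\<^sub>m pb' \<Longrightarrow> qb \<subseteq>\<^sub>m qb' \<Longrightarrow>
   eval_word w pb qb c = Some x \<Longrightarrow> eval_word w pb' qb' c = Some x"
proof (induction w arbitrary: x)
  case Nil then show ?case by simp
next
  case (Cons g w)
  obtain y where y: "eval_word w pb qb c = Some y" "ppow (if fst g = S then pb else qb) (snd g) y = Some x"
    using Cons.prems(4) by (cases "eval_word w pb qb c") auto
  have y': "eval_word w pb' qb' c = Some y" using Cons.IH[OF _ Cons.prems(2,3) y(1)] Cons.prems(1) by simp
  have pos: "0 \<le> snd g" using Cons.prems(1) by auto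
  have "pit (if fst g = S then pb else qb) (nat (snd g)) y = Some x" using y(2) pos by (simp add: ppow_def)
  then have "pit (if fst g = S then pb' else qb') (nat (snd g)) y = Some x"
  proof (cases "fst g = S")
    case True
    then show ?thesis using pit_mono[OF Cons.prems(2)] \<open>pit (if fst g = S then pb else qb) (nat (snd g)) y = Some x\<close> by simp
  next
    case False
    then show ?thesis using pit_mono[OF Cons.prems(3)] \<open>pit (if fst g = S then pb else qb) (nat (snd g)) y = Some x\<close> by simp
  qed
  then show ?case using y' pos by (simp add: ppow_def)
qed

lemma inf_sum: "infinite (UNIV :: ('a + nat) set)"
proof
  assume "finite (UNIV :: ('a + nat) set)"
  then have "finite (range (Inr :: nat \<Rightarrow> 'a + nat))" by (rule finite_subset[rotated]) simp
  then show False using finite_imageD[of Inr "UNIV :: nat set"] by (simp add: inj_on_def)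
qed

lemma iso_extend: "partial_isometry Y d g \<Longrightarrow> Y \<subseteq> Y1 \<Longrightarrow> (\<forall>a\<in>Y. \<forall>b\<in>Y. d1 a b = d a b) \<Longrightarrow> partial_isometry Y1 d1 g"
  unfolding partial_isometry_def
proof (elim conjE, intro conjI)
  assume a: "finite (dom g)" "dom g \<subseteq> Y" "ran g \<subseteq> Y" "inj_on g (dom g)"
    "\<forall>x\<in>dom g. \<forall>y\<in>dom g. d (the (g x)) (the (g y)) = d x y" "Y \<subseteq> Y1" "\<forall>a\<in>Y. \<forall>b\<in>Y. d1 a b = d a b"
  show "finite (dom g)" "dom g \<subseteq> Y1" "ran g \<subseteq> Y1" "inj_on g (dom g)" using a by auto
  show "\<forall>x\<in>dom g. \<forall>y\<in>dom g. d1 (the (g x)) (the (g y)) = d1 x y"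
  proof (intro ballI)
    fix x y assume xy: "x \<in> dom g" "y \<in> dom g"
    have "the (g x) \<in> Y" "the (g y) \<in> Y" using xy a(3) by (auto simp: ran_def)
    moreover have "x \<in> Y" "y \<in> Y" using xy a(2) by auto
    ultimately show "d1 (the (g x)) (the (g y)) = d1 x y" using a(5,7) xy by metis
  qed
qed

locale mctx =
  fixes A :: "'a set" and dA :: "'a \<Rightarrow> 'a \<Rightarrow> real" and p q :: "'a \<rightharpoonup> 'a" and \<delta> :: real
  assumes finA: "finite A" and metA: "metric_on A dA"
    and isop: "partial_isometry A dA p" and isoq: "partial_isometry A dA q"
    and perp: "Per p = Fix p" and perq: "Per q = Fix q" and Fne: "Fix p \<inter> Fix q \<noteq> {}"
    and dpos: "\<delta> > 0" and dle: "\<And>a b. a \<in> A \<Longrightarrow> b \<in> A \<Longrightarrow> a \<noteq> b \<Longrightarrow> \<delta> \<le> dA a b"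
begin

definition F where "F = Fix p \<inter> Fix q"
definition SGA where "SGA = add_semigroup_gen {dA a b | a b. a \<in> A \<and> b \<in> A}"
definition PhiF :: "('a + nat \<Rightarrow> 'a + nat \<Rightarrow> real) \<Rightarrow> 'a \<Rightarrow> 'a + nat \<Rightarrow> real" where
  "PhiF d a y = Min ((\<lambda>z. dA a z + d (Inl z) y) ` F)"

lemma FixpA: "Fix p \<subseteq> A" using isop unfolding partial_isometry_def Fix_def by auto
lemma FixqA: "Fix q \<subseteq> A" using isoq unfolding partial_isometry_def Fix_def by auto
lemma FA: "F \<subseteq> A" using FixpA by (auto simp: F_def)
lemma finF: "finite F" using FA finA finite_subset by blast
lemma Fne': "F \<noteq> {}" using Fne by (simp add: F_def)

lemma PhiF_le: "z \<in> F \<Longrightarrow> PhiF d a y \<le> dA a z + d (Inl z) y"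
  unfolding PhiF_def using finF by (auto intro: Min_le)
lemma PhiF_ex: "\<exists>z\<in>F. PhiF d a y = dA a z + d (Inl z) y"
proof -
  have "PhiF d a y \<in> (\<lambda>z. dA a z + d (Inl z) y) ` F" unfolding PhiF_def using Min_in finF Fne' by blast
  then show ?thesis by auto
qed

lemma dA_nn: "a \<in> A \<Longrightarrow> b \<in> A \<Longrightarrow> 0 \<le> dA a b" using metA unfolding metric_on_def by auto
lemma dA_0: "a \<in> A \<Longrightarrow> b \<in> A \<Longrightarrow> dA a b = 0 \<longleftrightarrow> a = b" using metA unfolding metric_on_def by auto

lemma SGA_lower: "x \<in> SGA \<Longrightarrow> x = 0 \<or> \<delta> \<le> x"
  unfolding SGA_def
  by (rule sg_lower[OF _ _ dpos]) (auto dest: dle dA_0)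

lemma SGA_mono: "(\<forall>u\<in>Y. \<forall>v\<in>Y. d u v \<in> SGA) \<Longrightarrow> x \<in> add_semigroup_gen {d a b | a b. a \<in> Y \<and> b \<in> Y} \<Longrightarrow> x \<in> SGA"
  unfolding SGA_def by (rule sg_mono) auto

definition good :: "nat \<Rightarrow> (gen \<times> int) list \<Rightarrow> ('a + nat) set \<Rightarrow> ('a + nat \<Rightarrow> 'a + nat \<Rightarrow> real)
    \<Rightarrow> ('a + nat \<rightharpoonup> 'a + nat) \<Rightarrow> ('a + nat \<rightharpoonup> 'a + nat) \<Rightarrow> ('a \<Rightarrow> 'a + nat) \<Rightarrow> ('a + nat) set \<Rightarrow> bool" where
  "good m w Y d pb qb xs Yp \<longleftrightarrow>
    finite Y \<and> Inl ` A \<subseteq> Y \<and> metric_on Y d \<and> (\<forall>a\<in>A. \<forall>b\<in>A. d (Inl a) (Inl b) = dA a b) \<and>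
    partial_isometry Y d pb \<and> partial_isometry Y d qb \<and> lp p \<subseteq>\<^sub>m pb \<and> lp q \<subseteq>\<^sub>m qb \<and>
    Per pb = Inl ` Fix p \<and> Fix pb = Inl ` Fix p \<and> Per qb = Inl ` Fix q \<and> Fix qb = Inl ` Fix q \<and>
    (\<forall>u\<in>Y. \<forall>v\<in>Y. d u v \<in> SGA) \<and>
    (\<forall>y\<in>Y. \<exists>a\<in>A. \<forall>z\<in>F. d (Inl z) y = dA z a) \<and>
    reduced_word w \<and> (w = [] \<or> fst (hd w) = T) \<and> length w = 2 * m \<and> (\<forall>g\<in>set w. 0 < snd g) \<and>
    (\<forall>a\<in>A. eval_word w pb qb (Inl a) = Some (xs a) \<and> xs a \<in> Y \<and> (\<forall>z\<in>F. d (xs a) (Inl z) = dA a z)) \<and>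
    Yp \<subseteq> Y \<and> Inl ` A \<subseteq> Yp \<and> dom pb \<subseteq> Yp \<and>
    (\<forall>a\<in>A. \<forall>y\<in>Yp. min (PhiF d a y) (real m * \<delta>) \<le> d (xs a) y)"

lemma good0: "good 0 [] (Inl ` A) (d0 dA) (lp p) (lp q) Inl (Inl ` A)"
  unfolding good_def
proof (intro conjI)
  show "finite (Inl ` A)" using finA by simp
  show "metric_on (Inl ` A) (d0 dA)" using metric_d0[OF metA] .
  show "partial_isometry (Inl ` A) (d0 dA) (lp p)" using iso_lp[OF isop] .
  show "partial_isometry (Inl ` A) (d0 dA) (lp q)" using iso_lp[OF isoq] .
  show "Per (lp p) = Inl ` Fix p" unfolding Per_lp perp ..
  show "Fix (lp p) = Inl ` Fix p" using Fix_lp by simp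
  show "Per (lp q) = Inl ` Fix q" unfolding Per_lp perq ..
  show "Fix (lp q) = Inl ` Fix q" using Fix_lp by simp
  show "\<forall>u\<in>Inl ` A. \<forall>v\<in>Inl ` A. d0 dA u v \<in> SGA"
    unfolding SGA_def by (auto simp: d0_def intro!: add_semigroup_gen.base)
  show "\<forall>y\<in>Inl ` A. \<exists>a\<in>A. \<forall>z\<in>F. d0 dA (Inl z) y = dA z a" by (auto simp: d0_def)
  show "reduced_word []" by (simp add: reduced_word_def)
  show "\<forall>a\<in>A. eval_word [] (lp p) (lp q) (Inl a) = Some (Inl a) \<and> Inl a \<in> Inl ` A \<and> (\<forall>z\<in>F. d0 dA (Inl a) (Inl z) = dA a z)"
    by (auto simp: d0_def)
  show "dom (lp p) \<subseteq> Inl ` A" using iso_lp[OF isop] unfolding partial_isometry_def by blast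
  show "\<forall>a\<in>A. \<forall>y\<in>Inl ` A. min (PhiF (d0 dA) a y) (real 0 * \<delta>) \<le> d0 dA (Inl a) y"
    using dA_nn by (auto simp: d0_def min_le_iff_disj)
qed (auto simp: d0_def)

end

context mctx begin

lemma mtri: "metric_on Y d \<Longrightarrow> x \<in> Y \<Longrightarrow> y \<in> Y \<Longrightarrow> z \<in> Y \<Longrightarrow> d x z \<le> d x y + d y z"
  unfolding metric_on_def by blast
lemma mnn: "metric_on Y d \<Longrightarrow> x \<in> Y \<Longrightarrow> y \<in> Y \<Longrightarrow> 0 \<le> d x y"
  unfolding metric_on_def by blast
lemma m0: "metric_on Y d \<Longrightarrow> x \<in> Y \<Longrightarrow> d x x = 0"
  unfolding metric_on_def by blast


lemma uctx_from:
  assumes "finite Y" "metric_on Y d" "partial_isometry Y d g" "Per g = Fix g" "Fix g \<noteq> {}"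
    "\<forall>u\<in>Y. \<forall>v\<in>Y. d u v \<in> SGA"
  shows "uctx Y d g \<delta>"
proof (rule uctx.intro)
  fix a b assume ab: "a \<in> Y" "b \<in> Y" "a \<noteq> b"
  then have "d a b \<noteq> 0" using assms(2) unfolding metric_on_def by auto
  then show "\<delta> \<le> d a b" using SGA_lower assms(6) ab by blast
qed (use assms dpos in \<open>blast+\<close>)

lemma Fixp_ne: "Inl ` Fix p \<noteq> {}" using Fne by auto
lemma Fixq_ne: "Inl ` Fix q \<noteq> {}" using Fne by auto

lemma round:
  assumes g: "good m w Y d pb qb xs Yp"
  shows "\<exists>w' Y' d' pb' qb' xs' Yp'. good (Suc m) w' Y' d' pb' qb' xs' Yp'"
proof -
  note G = g[unfolded good_def]
  note finY = G[THEN conjunct1]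
  note AY = G[THEN conjunct2, THEN conjunct1]
  note metY = G[THEN conjunct2, THEN conjunct2, THEN conjunct1]
  note dAp = G[THEN conjunct2, THEN conjunct2, THEN conjunct2, THEN conjunct1]
  note ipb = G[THEN conjunct2, THEN conjunct2, THEN conjunct2, THEN conjunct2, THEN conjunct1]
  note iqb = G[THEN conjunct2, THEN conjunct2, THEN conjunct2, THEN conjunct2, THEN conjunct2, THEN conjunct1]
  note lep = G[THEN conjunct2, THEN conjunct2, THEN conjunct2, THEN conjunct2, THEN conjunct2, THEN conjunct2, THEN conjunct1]
  note leq = G[THEN conjunct2, THEN conjunct2, THEN conjunct2, THEN conjunct2, THEN conjunct2, THEN conjunct2, THEN conjunct2, THEN conjunct1]
  note Perpb = G[THEN conjunct2, THEN conjunct2, THEN conjunct2, THEN conjunct2, THEN conjunct2, THEN conjunct2, THEN conjunct2, THEN conjunct2, THEN conjunct1]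
  note Fixpb = G[THEN conjunct2, THEN conjunct2, THEN conjunct2, THEN conjunct2, THEN conjunct2, THEN conjunct2, THEN conjunct2, THEN conjunct2, THEN conjunct2, THEN conjunct1]
  note Perqb = G[THEN conjunct2, THEN conjunct2, THEN conjunct2, THEN conjunct2, THEN conjunct2, THEN conjunct2, THEN conjunct2, THEN conjunct2, THEN conjunct2, THEN conjunct2, THEN conjunct1]
  note Fixqb = G[THEN conjunct2, THEN conjunct2, THEN conjunct2, THEN conjunct2, THEN conjunct2, THEN conjunct2, THEN conjunct2, THEN conjunct2, THEN conjunct2, THEN conjunct2, THEN conjunct2, THEN conjunct1]
  note sgY = G[THEN conjunct2, THEN conjunct2, THEN conjunct2, THEN conjunct2, THEN conjunct2, THEN conjunct2, THEN conjunct2, THEN conjunct2, THEN conjunct2, THEN conjunct2, THEN conjunct2, THEN conjunct2, THEN conjunct1]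
  note FY = G[THEN conjunct2, THEN conjunct2, THEN conjunct2, THEN conjunct2, THEN conjunct2, THEN conjunct2, THEN conjunct2, THEN conjunct2, THEN conjunct2, THEN conjunct2, THEN conjunct2, THEN conjunct2, THEN conjunct2, THEN conjunct1]
  note rw = G[THEN conjunct2, THEN conjunct2, THEN conjunct2, THEN conjunct2, THEN conjunct2, THEN conjunct2, THEN conjunct2, THEN conjunct2, THEN conjunct2, THEN conjunct2, THEN conjunct2, THEN conjunct2, THEN conjunct2, THEN conjunct2, THEN conjunct1]
  note hw = G[THEN conjunct2, THEN conjunct2, THEN conjunct2, THEN conjunct2, THEN conjunct2, THEN conjunct2, THEN conjunct2, THEN conjunct2, THEN conjunct2, THEN conjunct2, THEN conjunct2, THEN conjunct2, THEN conjunct2, THEN conjunct2, THEN conjunct2, THEN conjunct1]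
  note lw = G[THEN conjunct2, THEN conjunct2, THEN conjunct2, THEN conjunct2, THEN conjunct2, THEN conjunct2, THEN conjunct2, THEN conjunct2, THEN conjunct2, THEN conjunct2, THEN conjunct2, THEN conjunct2, THEN conjunct2, THEN conjunct2, THEN conjunct2, THEN conjunct2, THEN conjunct1]
  note pw = G[THEN conjunct2, THEN conjunct2, THEN conjunct2, THEN conjunct2, THEN conjunct2, THEN conjunct2, THEN conjunct2, THEN conjunct2, THEN conjunct2, THEN conjunct2, THEN conjunct2, THEN conjunct2, THEN conjunct2, THEN conjunct2, THEN conjunct2, THEN conjunct2, THEN conjunct2, THEN conjunct1]
  note ev = G[THEN conjunct2, THEN conjunct2, THEN conjunct2, THEN conjunct2, THEN conjunct2, THEN conjunct2, THEN conjunct2, THEN conjunct2, THEN conjunct2, THEN conjunct2, THEN conjunct2, THEN conjunct2, THEN conjunct2, THEN conjunct2, THEN conjunct2, THEN conjunct2, THEN conjunct2, THEN conjunct2, THEN conjunct1]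
  note YpY = G[THEN conjunct2, THEN conjunct2, THEN conjunct2, THEN conjunct2, THEN conjunct2, THEN conjunct2, THEN conjunct2, THEN conjunct2, THEN conjunct2, THEN conjunct2, THEN conjunct2, THEN conjunct2, THEN conjunct2, THEN conjunct2, THEN conjunct2, THEN conjunct2, THEN conjunct2, THEN conjunct2, THEN conjunct2, THEN conjunct1]
  note AYp = G[THEN conjunct2, THEN conjunct2, THEN conjunct2, THEN conjunct2, THEN conjunct2, THEN conjunct2, THEN conjunct2, THEN conjunct2, THEN conjunct2, THEN conjunct2, THEN conjunct2, THEN conjunct2, THEN conjunct2, THEN conjunct2, THEN conjunct2, THEN conjunct2, THEN conjunct2, THEN conjunct2, THEN conjunct2, THEN conjunct2, THEN conjunct1]
  note dpbYp = G[THEN conjunct2, THEN conjunct2, THEN conjunct2, THEN conjunct2, THEN conjunct2, THEN conjunct2, THEN conjunct2, THEN conjunct2, THEN conjunct2, THEN conjunct2, THEN conjunct2, THEN conjunct2, THEN conjunct2, THEN conjunct2, THEN conjunct2, THEN conjunct2, THEN conjunct2, THEN conjunct2, THEN conjunct2, THEN conjunct2, THEN conjunct2, THEN conjunct1]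
  note bnd = G[THEN conjunct2, THEN conjunct2, THEN conjunct2, THEN conjunct2, THEN conjunct2, THEN conjunct2, THEN conjunct2, THEN conjunct2, THEN conjunct2, THEN conjunct2, THEN conjunct2, THEN conjunct2, THEN conjunct2, THEN conjunct2, THEN conjunct2, THEN conjunct2, THEN conjunct2, THEN conjunct2, THEN conjunct2, THEN conjunct2, THEN conjunct2, THEN conjunct2]
  have u1: "uctx Y d pb \<delta>" using uctx_from[OF finY metY ipb] Perpb Fixpb sgY Fixp_ne by simp
  define N1 where "N1 = (m + 3) * (card Y + 1)"
  have N1: "N1 \<ge> 1" by (simp add: N1_def)
  obtain Y1 d1 pb1 where
    s1: "finite Y1" "Y \<subseteq> Y1" "metric_on Y1 d1" "\<forall>a\<in>Y. \<forall>b\<in>Y. d1 a b = d a b"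
      "partial_isometry Y1 d1 pb1" "pb \<subseteq>\<^sub>m pb1" "Per pb1 = Per pb" "Fix pb1 = Fix pb"
      "\<forall>x\<in>Y. pit pb1 N1 x \<noteq> None \<and> the (pit pb1 N1 x) \<in> Y1"
      "\<forall>u\<in>Y1. \<forall>v\<in>Y1. d1 u v \<in> add_semigroup_gen {d a b | a b. a \<in> Y \<and> b \<in> Y}"
      "\<forall>y\<in>Y1. \<exists>x\<in>Y. \<forall>z\<in>Fix pb. d1 z y = d z x"
      "\<forall>x\<in>Y. \<forall>y\<in>Y. min (Min ((\<lambda>z. d x z + d z y) ` Fix pb)) (\<delta> * (real N1 / real (card Y + 1) - 2))
        \<le> d1 (the (pit pb1 N1 x)) y"
    using unroll[OF inf_sum u1 N1] by blast
  have iqb1: "partial_isometry Y1 d1 qb" using iso_extend[OF iqb s1(2,4)] .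
  have sgY1: "\<forall>u\<in>Y1. \<forall>v\<in>Y1. d1 u v \<in> SGA" using s1(10) SGA_mono[OF sgY] by blast
  have u2: "uctx Y1 d1 qb \<delta>" using uctx_from[OF s1(1,3) iqb1] Perqb Fixqb sgY1 Fixq_ne by simp
  define N2 where "N2 = (m + 3) * (card Y1 + 1)"
  have N2: "N2 \<ge> 1" by (simp add: N2_def)
  obtain Y2 d2 qb2 where
    s2: "finite Y2" "Y1 \<subseteq> Y2" "metric_on Y2 d2" "\<forall>a\<in>Y1. \<forall>b\<in>Y1. d2 a b = d1 a b"
      "partial_isometry Y2 d2 qb2" "qb \<subseteq>\<^sub>m qb2" "Per qb2 = Per qb" "Fix qb2 = Fix qb"
      "\<forall>x\<in>Y1. pit qb2 N2 x \<noteq> None \<and> the (pit qb2 N2 x) \<in> Y2"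
      "\<forall>u\<in>Y2. \<forall>v\<in>Y2. d2 u v \<in> add_semigroup_gen {d1 a b | a b. a \<in> Y1 \<and> b \<in> Y1}"
      "\<forall>y\<in>Y2. \<exists>x\<in>Y1. \<forall>z\<in>Fix qb. d2 z y = d1 z x"
      "\<forall>x\<in>Y1. \<forall>y\<in>Y1. min (Min ((\<lambda>z. d1 x z + d1 z y) ` Fix qb)) (\<delta> * (real N2 / real (card Y1 + 1) - 2))
        \<le> d2 (the (pit qb2 N2 x)) y"
    using unroll[OF inf_sum u2 N2] by blast
  have ipb2: "partial_isometry Y2 d2 pb1" using iso_extend[OF s1(5) s2(2,4)] .
  have YY2: "Y \<subseteq> Y2" using s1(2) s2(2) by blast
  have d21: "\<forall>a\<in>Y. \<forall>b\<in>Y. d2 a b = d a b"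
  proof (intro ballI)
    fix a b assume ab: "a \<in> Y" "b \<in> Y"
    then have "a \<in> Y1" "b \<in> Y1" using s1(2) by auto
    then show "d2 a b = d a b" using s1(4) s2(4) ab by simp
  qed
  define xs1 where "xs1 a = the (pit pb1 N1 (xs a))" for a
  define xs2 where "xs2 a = the (pit qb2 N2 (xs1 a))" for a
  define w' where "w' = (T, int N2) # (S, int N1) # w"
  have xs1: "a \<in> A \<Longrightarrow> pit pb1 N1 (xs a) = Some (xs1 a) \<and> xs1 a \<in> Y1" for a
    using s1(9) ev unfolding xs1_def by auto
  have xs2: "a \<in> A \<Longrightarrow> pit qb2 N2 (xs1 a) = Some (xs2 a) \<and> xs2 a \<in> Y2" for a
    using s2(9) xs1 unfolding xs2_def by auto
  have FinF: "z \<in> F \<Longrightarrow> Inl z \<in> Fix pb \<and> Inl z \<in> Fix qb" for z using Fixpb Fixqb by (auto simp: F_def)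
  have e1: "N1 / real (card Y + 1) - 2 = real m + 1" unfolding N1_def by (simp add: field_simps)
  have e2: "N2 / real (card Y1 + 1) - 2 = real m + 1" unfolding N2_def by (simp add: field_simps)
  have "good (Suc m) w' Y2 d2 pb1 qb2 xs2 Y1"
    unfolding good_def
  proof (intro conjI)
    show "finite Y2" using s2(1) .
    show "Inl ` A \<subseteq> Y2" using AY YY2 by blast
    show "metric_on Y2 d2" using s2(3) .
    show "\<forall>a\<in>A. \<forall>b\<in>A. d2 (Inl a) (Inl b) = dA a b"
    proof (intro ballI)
      fix a b assume ab: "a \<in> A" "b \<in> A"
      then have "Inl a \<in> Y" "Inl b \<in> Y" using AY by auto
      then show "d2 (Inl a) (Inl b) = dA a b" using d21 dAp ab by simp
    qed
    show "partial_isometry Y2 d2 pb1" using ipb2 .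
    show "partial_isometry Y2 d2 qb2" using s2(5) .
    show "lp p \<subseteq>\<^sub>m pb1" using map_le_trans[OF lep s1(6)] .
    show "lp q \<subseteq>\<^sub>m qb2" using map_le_trans[OF leq s2(6)] .
    show "Per pb1 = Inl ` Fix p" "Fix pb1 = Inl ` Fix p" using s1(7,8) Perpb Fixpb by auto
    show "Per qb2 = Inl ` Fix q" "Fix qb2 = Inl ` Fix q" using s2(7,8) Perqb Fixqb by auto
    show "\<forall>u\<in>Y2. \<forall>v\<in>Y2. d2 u v \<in> SGA" using s2(10) SGA_mono[OF sgY1] by blast
    show "\<forall>y\<in>Y2. \<exists>a\<in>A. \<forall>z\<in>F. d2 (Inl z) y = dA z a"
    proof
      fix y assume y: "y \<in> Y2"
      obtain x1 where x1: "x1 \<in> Y1" "\<forall>z\<in>Fix qb. d2 z y = d1 z x1" using s2(11) y by blast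
      obtain x where x: "x \<in> Y" "\<forall>z\<in>Fix pb. d1 z x1 = d z x" using s1(11) x1 by blast
      obtain a where a: "a \<in> A" "\<forall>z\<in>F. d (Inl z) x = dA z a" using FY x by blast
      show "\<exists>a\<in>A. \<forall>z\<in>F. d2 (Inl z) y = dA z a" using a x x1 FinF by (intro bexI[OF _ a(1)]) auto
    qed
    show "reduced_word w'" unfolding w'_def using reduced_cons2[OF rw hw] N1 N2 by simp
    show "w' = [] \<or> fst (hd w') = T" by (simp add: w'_def)
    show "length w' = 2 * Suc m" using lw by (simp add: w'_def)
    show "\<forall>g\<in>set w'. 0 < snd g" using pw N1 N2 by (auto simp: w'_def)
    show "\<forall>a\<in>A. eval_word w' pb1 qb2 (Inl a) = Some (xs2 a) \<and> xs2 a \<in> Y2 \<and> (\<forall>z\<in>F. d2 (xs2 a) (Inl z) = dA a z)"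
    proof (intro ballI)
      fix a assume a: "a \<in> A"
      have ew: "eval_word w pb1 qb2 (Inl a) = Some (xs a)"
        using eval_word_mono[OF pw s1(6) s2(6)] ev a by blast
      have "ppow pb1 (int N1) (xs a) = Some (xs1 a)" using xs1[OF a] by (simp add: ppow_nat)
      moreover have "ppow qb2 (int N2) (xs1 a) = Some (xs2 a)" using xs2[OF a] by (simp add: ppow_nat)
      ultimately have E1: "eval_word w' pb1 qb2 (Inl a) = Some (xs2 a)" using ew by (simp add: w'_def)
      have E2: "xs2 a \<in> Y2" using xs2[OF a] by blast
      have E3: "\<forall>z\<in>F. d2 (xs2 a) (Inl z) = dA a z"
      proof
        fix z assume z: "z \<in> F"
        have zY: "Inl z \<in> Y" using z FA AY by auto
        have "d2 (xs2 a) (Inl z) = d2 (xs1 a) (Inl z)"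
          using pit_iso_fix[OF s2(5)] xs2[OF a] FinF[OF z] s2(8) by auto
        also have "\<dots> = d1 (xs1 a) (Inl z)" using s2(4) xs1[OF a] zY s1(2) by auto
        also have "\<dots> = d1 (xs a) (Inl z)" using pit_iso_fix[OF s1(5)] xs1[OF a] FinF[OF z] s1(8) by auto
        also have "\<dots> = d (xs a) (Inl z)" using s1(4) ev a zY by auto
        also have "\<dots> = dA a z" using ev a z by auto
        finally show "d2 (xs2 a) (Inl z) = dA a z" .
      qed
      show "eval_word w' pb1 qb2 (Inl a) = Some (xs2 a) \<and> xs2 a \<in> Y2 \<and> (\<forall>z\<in>F. d2 (xs2 a) (Inl z) = dA a z)"
        using E1 E2 E3 by blast
    qed
    show "Y1 \<subseteq> Y2" using s2(2) .
    show "Inl ` A \<subseteq> Y1" using AY s1(2) by blast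
    show "dom pb1 \<subseteq> Y1" using s1(5) unfolding partial_isometry_def by blast
    show "\<forall>a\<in>A. \<forall>y\<in>Y1. min (PhiF d2 a y) (real (Suc m) * \<delta>) \<le> d2 (xs2 a) y"
    proof (intro ballI)
      fix a y assume a: "a \<in> A" and y: "y \<in> Y1"
      let ?B = "real (Suc m) * \<delta>"
      have eB: "\<delta> * (real m + 1) = ?B" by (simp add: algebra_simps)
      have u: "xs a \<in> Y" using ev a by blast
      have u1: "xs1 a \<in> Y1" using xs1[OF a] by blast
      have far2: "min (Min ((\<lambda>z. d1 (xs1 a) z + d1 z y) ` Fix qb)) ?B \<le> d2 (xs2 a) y"
        using s2(12) u1 y e2 eB unfolding xs2_def by metis
      have finq: "finite (Fix qb)" using Fixqb FixqA finA finite_subset by (metis finite_imageI)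
      have C: "min (PhiF d2 a y) ?B \<le> d1 (xs1 a) z + d1 z y" if z: "z \<in> Fix qb" for z
      proof -
        obtain zq where zq: "z = Inl zq" "zq \<in> Fix q" using z Fixqb by auto
        have zY: "z \<in> Y" using zq FixqA AY by auto
        have zY1: "z \<in> Y1" using zY s1(2) by auto
        have far1: "min (Min ((\<lambda>z'. d (xs a) z' + d z' z) ` Fix pb)) ?B \<le> d1 (xs1 a) z"
          using s1(12) u zY e1 eB unfolding xs1_def by metis
        have dzy: "0 \<le> d1 z y" using mnn[OF s1(3) zY1 y] .
        have d2zy: "d2 z y = d1 z y" using s2(4) zY1 y by simp
        show ?thesis
        proof (cases "?B \<le> Min ((\<lambda>z'. d (xs a) z' + d z' z) ` Fix pb)")
          case True
          then have "?B \<le> d1 (xs1 a) z" using far1 by simp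
          then show ?thesis using dzy by (simp add: min_le_iff_disj)
        next
          case False
          have finp: "finite (Fix pb)" using Fixpb FixpA finA finite_subset by (metis finite_imageI)
          have nep: "Fix pb \<noteq> {}" using Fixpb Fixp_ne by simp
          obtain z' where z': "z' \<in> Fix pb" "Min ((\<lambda>z'. d (xs a) z' + d z' z) ` Fix pb) = d (xs a) z' + d z' z"
            using Min_in[OF finite_imageI[OF finp], of "\<lambda>z'. d (xs a) z' + d z' z"] nep by auto
          have low: "d (xs a) z' + d z' z \<le> d1 (xs1 a) z" using far1 False z'(2) by simp
          obtain zp where zp: "z' = Inl zp" "zp \<in> Fix p" using z'(1) Fixpb by auto
          have z'Y: "z' \<in> Y" using zp FixpA AY by auto
          have z'Yp: "z' \<in> Yp" using zp FixpA AYp by auto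
          have b1: "min (PhiF d a z') (real m * \<delta>) \<le> d (xs a) z'" using bnd a z'Yp by blast
          show ?thesis
          proof (cases "z' = z")
            case True
            then have zF: "zq \<in> F" using zp zq by (auto simp: F_def)
            have "PhiF d2 a y \<le> dA a zq + d2 (Inl zq) y" using PhiF_le[OF zF] .
            also have "\<dots> = d (xs a) z + d1 z y" using ev a zF zq d2zy by simp
            also have "\<dots> \<le> d1 (xs1 a) z + d1 z y" using low True m0[OF metY zY] by simp
            finally show ?thesis by (simp add: min_le_iff_disj)
          next
            case ne: False
            have dz: "\<delta> \<le> d z' z"
            proof -
              have "d z' z \<noteq> 0" using ne metY z'Y zY unfolding metric_on_def by auto
              then show ?thesis using SGA_lower sgY z'Y zY by blast
            qed
            show ?thesis
            proof (cases "real m * \<delta> \<le> PhiF d a z'")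
              case True
              then have "real m * \<delta> \<le> d (xs a) z'" using b1 by simp
              then have "?B \<le> d1 (xs1 a) z + d1 z y" using low dz dzy by (simp add: algebra_simps)
              then show ?thesis by (simp add: min_le_iff_disj)
            next
              case False
              then have pl: "PhiF d a z' \<le> d (xs a) z'" using b1 by simp
              obtain w0 where w0: "w0 \<in> F" "PhiF d a z' = dA a w0 + d (Inl w0) z'" using PhiF_ex by blast
              have w0Y: "Inl w0 \<in> Y" using w0 FA AY by auto
              have w0Y2: "Inl w0 \<in> Y2" "z' \<in> Y2" "z \<in> Y2" "y \<in> Y2" using w0Y z'Y zY y YY2 s2(2) by auto
              have "PhiF d2 a y \<le> dA a w0 + d2 (Inl w0) y" using PhiF_le[OF w0(1)] .
              also have "\<dots> \<le> dA a w0 + (d2 (Inl w0) z' + d2 z' z + d2 z y)"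
                using mtri[OF s2(3) w0Y2(1,2,4)] mtri[OF s2(3) w0Y2(2,3,4)] by simp
              also have "\<dots> = dA a w0 + d (Inl w0) z' + d z' z + d1 z y"
                using d21 w0Y z'Y zY d2zy by simp
              also have "\<dots> \<le> d1 (xs1 a) z + d1 z y" using w0 pl low by simp
              finally show ?thesis by (simp add: min_le_iff_disj)
            qed
          qed
        qed
      qed
      have neq: "Fix qb \<noteq> {}" using Fixqb Fixq_ne by simp
      have "min (PhiF d2 a y) ?B \<le> Min ((\<lambda>z. d1 (xs1 a) z + d1 z y) ` Fix qb)"
        using C finq neq by (intro Min.boundedI) auto
      then have "min (PhiF d2 a y) ?B \<le> min (Min ((\<lambda>z. d1 (xs1 a) z + d1 z y) ` Fix qb)) ?B" by simp
      then show "min (PhiF d2 a y) ?B \<le> d2 (xs2 a) y" using far2 by linarith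
    qed
  qed
  then show ?thesis by blast
qed

end

context mctx begin

lemma iter: "\<exists>w Y d pb qb xs Yp. good m w Y d pb qb xs Yp"
proof (induction m)
  case 0 then show ?case using good0 by blast
next
  case (Suc m) then show ?case using round by blast
qed

lemma final:
  assumes M1: "M \<ge> 1" and MD: "2 * Dm \<le> real M * \<delta>" and Dm: "\<forall>a\<in>A. \<forall>b\<in>A. dA a b \<le> Dm"
  shows "\<exists>(B :: ('a + nat) set) d pb qb K v.
    finite B \<and> metric_on B d \<and> Inl ` A \<subseteq> B \<and>
    (\<forall>a\<in>A. \<forall>b\<in>A. d (Inl a) (Inl b) = dA a b) \<and>
    partial_isometry B d pb \<and> partial_isometry B d qb \<and>
    (\<forall>x\<in>dom p. pb (Inl x) = map_option Inl (p x)) \<and>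
    (\<forall>x\<in>dom q. qb (Inl x) = map_option Inl (q x)) \<and>
    K \<noteq> 0 \<and> reduced_word ((T, K) # v) \<and>
    Per pb = Inl ` Per p \<and> Per qb = Inl ` Per q \<and>
    (\<forall>a\<in>A. eval_word ((T, K) # v) pb qb (Inl a) \<noteq> None) \<and>
    (\<forall>x\<in>(\<lambda>a. the (eval_word ((T, K) # v) pb qb (Inl a))) ` A. \<forall>y\<in>dom pb.
       d x y = Min {d x z + d z y | z. z \<in> Inl ` (Fix p \<inter> Fix q)}) \<and>
    (\<forall>x\<in>B. \<forall>y\<in>B. d x y \<in> SGA)"
proof -
  obtain w Y d pb qb xs Yp where g: "good M w Y d pb qb xs Yp" using iter by blast
  note G = g[unfolded good_def]
  note finY = G[THEN conjunct1]
  note AY = G[THEN conjunct2, THEN conjunct1]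
  note metY = G[THEN conjunct2, THEN conjunct2, THEN conjunct1]
  note dAp = G[THEN conjunct2, THEN conjunct2, THEN conjunct2, THEN conjunct1]
  note ipb = G[THEN conjunct2, THEN conjunct2, THEN conjunct2, THEN conjunct2, THEN conjunct1]
  note iqb = G[THEN conjunct2, THEN conjunct2, THEN conjunct2, THEN conjunct2, THEN conjunct2, THEN conjunct1]
  note lep = G[THEN conjunct2, THEN conjunct2, THEN conjunct2, THEN conjunct2, THEN conjunct2, THEN conjunct2, THEN conjunct1]
  note leq = G[THEN conjunct2, THEN conjunct2, THEN conjunct2, THEN conjunct2, THEN conjunct2, THEN conjunct2, THEN conjunct2, THEN conjunct1]
  note Perpb = G[THEN conjunct2, THEN conjunct2, THEN conjunct2, THEN conjunct2, THEN conjunct2, THEN conjunct2, THEN conjunct2, THEN conjunct2, THEN conjunct1]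
  note Fixpb = G[THEN conjunct2, THEN conjunct2, THEN conjunct2, THEN conjunct2, THEN conjunct2, THEN conjunct2, THEN conjunct2, THEN conjunct2, THEN conjunct2, THEN conjunct1]
  note Perqb = G[THEN conjunct2, THEN conjunct2, THEN conjunct2, THEN conjunct2, THEN conjunct2, THEN conjunct2, THEN conjunct2, THEN conjunct2, THEN conjunct2, THEN conjunct2, THEN conjunct1]
  note Fixqb = G[THEN conjunct2, THEN conjunct2, THEN conjunct2, THEN conjunct2, THEN conjunct2, THEN conjunct2, THEN conjunct2, THEN conjunct2, THEN conjunct2, THEN conjunct2, THEN conjunct2, THEN conjunct1]
  note sgY = G[THEN conjunct2, THEN conjunct2, THEN conjunct2, THEN conjunct2, THEN conjunct2, THEN conjunct2, THEN conjunct2, THEN conjunct2, THEN conjunct2, THEN conjunct2, THEN conjunct2, THEN conjunct2, THEN conjunct1]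
  note FY = G[THEN conjunct2, THEN conjunct2, THEN conjunct2, THEN conjunct2, THEN conjunct2, THEN conjunct2, THEN conjunct2, THEN conjunct2, THEN conjunct2, THEN conjunct2, THEN conjunct2, THEN conjunct2, THEN conjunct2, THEN conjunct1]
  note rw = G[THEN conjunct2, THEN conjunct2, THEN conjunct2, THEN conjunct2, THEN conjunct2, THEN conjunct2, THEN conjunct2, THEN conjunct2, THEN conjunct2, THEN conjunct2, THEN conjunct2, THEN conjunct2, THEN conjunct2, THEN conjunct2, THEN conjunct1]
  note hw = G[THEN conjunct2, THEN conjunct2, THEN conjunct2, THEN conjunct2, THEN conjunct2, THEN conjunct2, THEN conjunct2, THEN conjunct2, THEN conjunct2, THEN conjunct2, THEN conjunct2, THEN conjunct2, THEN conjunct2, THEN conjunct2, THEN conjunct2, THEN conjunct1]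
  note lw = G[THEN conjunct2, THEN conjunct2, THEN conjunct2, THEN conjunct2, THEN conjunct2, THEN conjunct2, THEN conjunct2, THEN conjunct2, THEN conjunct2, THEN conjunct2, THEN conjunct2, THEN conjunct2, THEN conjunct2, THEN conjunct2, THEN conjunct2, THEN conjunct2, THEN conjunct1]
  note pw = G[THEN conjunct2, THEN conjunct2, THEN conjunct2, THEN conjunct2, THEN conjunct2, THEN conjunct2, THEN conjunct2, THEN conjunct2, THEN conjunct2, THEN conjunct2, THEN conjunct2, THEN conjunct2, THEN conjunct2, THEN conjunct2, THEN conjunct2, THEN conjunct2, THEN conjunct2, THEN conjunct1]
  note ev = G[THEN conjunct2, THEN conjunct2, THEN conjunct2, THEN conjunct2, THEN conjunct2, THEN conjunct2, THEN conjunct2, THEN conjunct2, THEN conjunct2, THEN conjunct2, THEN conjunct2, THEN conjunct2, THEN conjunct2, THEN conjunct2, THEN conjunct2, THEN conjunct2, THEN conjunct2, THEN conjunct2, THEN conjunct1]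
  note YpY = G[THEN conjunct2, THEN conjunct2, THEN conjunct2, THEN conjunct2, THEN conjunct2, THEN conjunct2, THEN conjunct2, THEN conjunct2, THEN conjunct2, THEN conjunct2, THEN conjunct2, THEN conjunct2, THEN conjunct2, THEN conjunct2, THEN conjunct2, THEN conjunct2, THEN conjunct2, THEN conjunct2, THEN conjunct2, THEN conjunct1]
  note AYp = G[THEN conjunct2, THEN conjunct2, THEN conjunct2, THEN conjunct2, THEN conjunct2, THEN conjunct2, THEN conjunct2, THEN conjunct2, THEN conjunct2, THEN conjunct2, THEN conjunct2, THEN conjunct2, THEN conjunct2, THEN conjunct2, THEN conjunct2, THEN conjunct2, THEN conjunct2, THEN conjunct2, THEN conjunct2, THEN conjunct2, THEN conjunct1]
  note dpbYp = G[THEN conjunct2, THEN conjunct2, THEN conjunct2, THEN conjunct2, THEN conjunct2, THEN conjunct2, THEN conjunct2, THEN conjunct2, THEN conjunct2, THEN conjunct2, THEN conjunct2, THEN conjunct2, THEN conjunct2, THEN conjunct2, THEN conjunct2, THEN conjunct2, THEN conjunct2, THEN conjunct2, THEN conjunct2, THEN conjunct2, THEN conjunct2, THEN conjunct1]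
  note bnd = G[THEN conjunct2, THEN conjunct2, THEN conjunct2, THEN conjunct2, THEN conjunct2, THEN conjunct2, THEN conjunct2, THEN conjunct2, THEN conjunct2, THEN conjunct2, THEN conjunct2, THEN conjunct2, THEN conjunct2, THEN conjunct2, THEN conjunct2, THEN conjunct2, THEN conjunct2, THEN conjunct2, THEN conjunct2, THEN conjunct2, THEN conjunct2, THEN conjunct2]
  have wne: "w \<noteq> []" using lw M1 by auto
  obtain K v where wKv: "w = (T, K) # v"
    using wne hw by (cases w) auto
  have "snd (w ! 0) \<noteq> 0" using rw wne unfolding reduced_word_def by auto
  then have K0: "K \<noteq> 0" using wKv by simp
  have free: "\<forall>x\<in>(\<lambda>a. the (eval_word ((T, K) # v) pb qb (Inl a))) ` A. \<forall>y\<in>dom pb.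
       d x y = Min {d x z + d z y | z. z \<in> Inl ` (Fix p \<inter> Fix q)}"
  proof (intro ballI)
    fix x y assume x: "x \<in> (\<lambda>a. the (eval_word ((T, K) # v) pb qb (Inl a))) ` A" and y: "y \<in> dom pb"
    then obtain a where a: "a \<in> A" "x = xs a" using ev wKv by auto
    have yY: "y \<in> Y" "y \<in> Yp" using y dpbYp YpY by auto
    have xY: "x \<in> Y" using ev a by auto
    have s1: "{d x z + d z y | z. z \<in> Inl ` (Fix p \<inter> Fix q)} = (\<lambda>z. d x (Inl z) + d (Inl z) y) ` F"
      unfolding F_def by blast
    have s2: "(\<lambda>z. d x (Inl z) + d (Inl z) y) ` F = (\<lambda>z. dA a z + d (Inl z) y) ` F"
      using ev a by (intro image_cong) auto
    have set_eq: "{d x z + d z y | z. z \<in> Inl ` (Fix p \<inter> Fix q)} = (\<lambda>z. dA a z + d (Inl z) y) ` F"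
      using s1 s2 by simp
    have "PhiF d a y \<le> real M * \<delta>"
    proof -
      obtain z0 where z0: "z0 \<in> F" using Fne' by auto
      obtain a' where a': "a' \<in> A" "\<forall>z\<in>F. d (Inl z) y = dA z a'" using FY yY by blast
      have "PhiF d a y \<le> dA a z0 + d (Inl z0) y" using PhiF_le[OF z0] .
      also have "\<dots> = dA a z0 + dA z0 a'" using a' z0 by simp
      also have "\<dots> \<le> 2 * Dm"
      proof -
        have z0A: "z0 \<in> A" using z0 FA by auto
        have "dA a z0 \<le> Dm" "dA z0 a' \<le> Dm" using Dm a(1) a'(1) z0A by auto
        then show ?thesis by simp
      qed
      finally show ?thesis using MD by simp
    qed
    moreover have "min (PhiF d a y) (real M * \<delta>) \<le> d (xs a) y" using bnd a(1) yY(2) by blast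
    ultimately have lo: "PhiF d a y \<le> d x y" using a(2) by simp
    obtain w0 where w0: "w0 \<in> F" "PhiF d a y = dA a w0 + d (Inl w0) y" using PhiF_ex by blast
    have w0Y: "Inl w0 \<in> Y" using w0 FA AY by auto
    have "d x y \<le> d x (Inl w0) + d (Inl w0) y" using mtri[OF metY xY w0Y yY(1)] .
    also have "\<dots> = PhiF d a y" using w0 ev a by simp
    finally have "d x y = PhiF d a y" using lo by simp
    then show "d x y = Min {d x z + d z y | z. z \<in> Inl ` (Fix p \<inter> Fix q)}"
      using set_eq by (simp add: PhiF_def)
  qed
  have pbp: "\<forall>x\<in>dom p. pb (Inl x) = map_option Inl (p x)" using lp_le[OF lep] by blast
  have qbq: "\<forall>x\<in>dom q. qb (Inl x) = map_option Inl (q x)" using lp_le[OF leq] by blast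
  have rw': "reduced_word ((T, K) # v)" using rw wKv by simp
  have Pp: "Per pb = Inl ` Per p" using Perpb perp by simp
  have Pq: "Per qb = Inl ` Per q" using Perqb perq by simp
  have evn: "\<forall>a\<in>A. eval_word ((T, K) # v) pb qb (Inl a) \<noteq> None" using ev wKv by simp
  show ?thesis
    by (rule exI[of _ Y], rule exI[of _ d], rule exI[of _ pb], rule exI[of _ qb], rule exI[of _ K], rule exI[of _ v])
      (intro conjI finY metY AY dAp ipb iqb pbp qbq K0 rw' Pp Pq evn free sgY)
qed

end

theorem theorem4p13:
  fixes A :: "'a set" and dA :: "'a \<Rightarrow> 'a \<Rightarrow> real" and p q :: "'a \<rightharpoonup> 'a"
  assumes "finite A" and "metric_on A dA"
    and "partial_isometry A dA p" and "partial_isometry A dA q"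
    and "Per p = Fix p" and "Per q = Fix q"
    and "Fix p \<inter> Fix q \<noteq> {}"
  shows "\<exists>(B :: ('a + nat) set) d pb qb K v.
    finite B \<and> metric_on B d \<and> Inl ` A \<subseteq> B \<and>
    (\<forall>a\<in>A. \<forall>b\<in>A. d (Inl a) (Inl b) = dA a b) \<and>
    partial_isometry B d pb \<and> partial_isometry B d qb \<and>
    (\<forall>x\<in>dom p. pb (Inl x) = map_option Inl (p x)) \<and>
    (\<forall>x\<in>dom q. qb (Inl x) = map_option Inl (q x)) \<and>
    K \<noteq> 0 \<and> reduced_word ((T, K) # v) \<and>
    Per pb = Inl ` Per p \<and> Per qb = Inl ` Per q \<and>
    (\<forall>a\<in>A. eval_word ((T, K) # v) pb qb (Inl a) \<noteq> None) \<and>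
    (\<forall>x\<in>(\<lambda>a. the (eval_word ((T, K) # v) pb qb (Inl a))) ` A. \<forall>y\<in>dom pb.
       d x y = Min {d x z + d z y | z. z \<in> Inl ` (Fix p \<inter> Fix q)}) \<and>
    (\<forall>x\<in>B. \<forall>y\<in>B. d x y \<in> add_semigroup_gen {dA a b | a b. a \<in> A \<and> b \<in> A}) \<and>
    den (dom pb \<union> Inl ` A) d = den (Inl ` A) d \<and>
    den (Inl ` A) d = den (dom qb \<union> Inl ` A) d"
proof (cases "\<exists>a\<in>A. \<exists>b\<in>A. a \<noteq> b")
  case True
  let ?Sd = "{dA x y | x y. x \<in> A \<and> y \<in> A \<and> x \<noteq> y}"
  have finSd: "finite ?Sd"
  proof -
    have "?Sd \<subseteq> (\<lambda>(x,y). dA x y) ` (A \<times> A)" by auto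
    then show ?thesis using assms(1) finite_subset by blast
  qed
  have neSd: "?Sd \<noteq> {}" using True by blast
  define \<delta> where "\<delta> = den A dA"
  have dS: "\<delta> \<in> ?Sd" unfolding \<delta>_def den_def using Min_in[OF finSd neSd] .
  have dle: "\<And>a b. a \<in> A \<Longrightarrow> b \<in> A \<Longrightarrow> a \<noteq> b \<Longrightarrow> \<delta> \<le> dA a b"
    unfolding \<delta>_def den_def using Min_le[OF finSd] by blast
  have dpos: "\<delta> > 0"
  proof -
    obtain x y where "x \<in> A" "y \<in> A" "x \<noteq> y" "\<delta> = dA x y" using dS by blast
    moreover have "0 \<le> dA x y" "dA x y \<noteq> 0" using assms(2) \<open>x \<in> A\<close> \<open>y \<in> A\<close> \<open>x \<noteq> y\<close>
      unfolding metric_on_def by auto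
    ultimately show ?thesis by simp
  qed
  define Dm where "Dm = Max ((\<lambda>(x,y). dA x y) ` (A \<times> A))"
  have Dm: "\<forall>a\<in>A. \<forall>b\<in>A. dA a b \<le> Dm"
    unfolding Dm_def using assms(1) by (auto intro!: Max_ge)
  define M where "M = nat \<lceil>2 * Dm / \<delta>\<rceil> + 1"
  have M1: "M \<ge> 1" by (simp add: M_def)
  have MD: "2 * Dm \<le> real M * \<delta>"
  proof -
    have "2 * Dm / \<delta> \<le> real M" unfolding M_def by linarith
    then show ?thesis using dpos by (simp add: pos_divide_le_eq)
  qed
  interpret mctx A dA p q \<delta>
    by (rule mctx.intro[OF assms(1-7) dpos dle])
  have "\<exists>(B :: ('a + nat) set) d pb qb K v. (finite B) \<and> (metric_on B d) \<and> (Inl ` A \<subseteq> B) \<and> ((\<forall>a\<in>A. \<forall>b\<in>A. d (Inl a) (Inl b) = dA a b)) \<and> (partial_isometry B d pb) \<and> (partial_isometry B d qb) \<and> ((\<forall>x\<in>dom p. pb (Inl x) = map_option Inl (p x))) \<and> ((\<forall>x\<in>dom q. qb (Inl x) = map_option Inl (q x))) \<and> (K \<noteq> 0) \<and> (reduced_word ((T, K) # v)) \<and> (Per pb = Inl ` Per p) \<and> (Per qb = Inl ` Per q) \<and> ((\<forall>a\<in>A. eval_word ((T, K) # v) pb qb (Inl a) \<noteq> None)) \<and> ((\<forall>x\<in>(\<lambda>a. the (eval_word ((T, K) # v) pb qb (Inl a))) ` A. \<forall>y\<in>dom pb.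
       d x y = Min {d x z + d z y | z. z \<in> Inl ` (Fix p \<inter> Fix q)})) \<and> ((\<forall>x\<in>B. \<forall>y\<in>B. d x y \<in> SGA))"
    by (rule final[OF M1 MD Dm])
  then show ?thesis
  proof (elim exE conjE)
    fix B :: "('a + nat) set" and d pb qb K v
    assume R1: "finite B"
      and R2: "metric_on B d"
      and R3: "Inl ` A \<subseteq> B"
      and R4: "(\<forall>a\<in>A. \<forall>b\<in>A. d (Inl a) (Inl b) = dA a b)"
      and R5: "partial_isometry B d pb"
      and R6: "partial_isometry B d qb"
      and R7: "(\<forall>x\<in>dom p. pb (Inl x) = map_option Inl (p x))"
      and R8: "(\<forall>x\<in>dom q. qb (Inl x) = map_option Inl (q x))"
      and R9: "K \<noteq> 0"
      and R10: "reduced_word ((T, K) # v)"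
      and R11: "Per pb = Inl ` Per p"
      and R12: "Per qb = Inl ` Per q"
      and R13: "(\<forall>a\<in>A. eval_word ((T, K) # v) pb qb (Inl a) \<noteq> None)"
      and R14: "(\<forall>x\<in>(\<lambda>a. the (eval_word ((T, K) # v) pb qb (Inl a))) ` A. \<forall>y\<in>dom pb.
       d x y = Min {d x z + d z y | z. z \<in> Inl ` (Fix p \<inter> Fix q)})"
      and R15: "(\<forall>x\<in>B. \<forall>y\<in>B. d x y \<in> SGA)"
    have denS: "den S d = \<delta>" if S: "S \<subseteq> B" "Inl ` A \<subseteq> S" for S
    proof -
      let ?T = "{d x y | x y. x \<in> S \<and> y \<in> S \<and> x \<noteq> y}"
      have finS: "finite S" using S R1 finite_subset by blast
      have finT: "finite ?T"
      proof -
        have "?T \<subseteq> (\<lambda>(x,y). d x y) ` (S \<times> S)" by auto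
        then show ?thesis using finS finite_subset by blast
      qed
      have inT: "\<delta> \<in> ?T"
      proof -
        obtain x y where xy: "x \<in> A" "y \<in> A" "x \<noteq> y" "\<delta> = dA x y" using dS by blast
        then have "d (Inl x) (Inl y) = \<delta>" using R4 by simp
        then show ?thesis using xy S(2) by blast
      qed
      have geT: "\<delta> \<le> t" if t: "t \<in> ?T" for t
      proof -
        obtain x y where xy: "x \<in> S" "y \<in> S" "x \<noteq> y" "t = d x y" using t by blast
        have xyB: "x \<in> B" "y \<in> B" using xy S(1) by auto
        have "d x y \<noteq> 0" using R2 xyB xy(3) unfolding metric_on_def by auto
        moreover have "d x y \<in> SGA" using R15 xyB by blast
        ultimately show ?thesis using SGA_lower xy(4) by blast
      qed
      show ?thesis unfolding den_def by (rule Min_eqI[OF finT geT inT])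
    qed
    have dpbB: "dom pb \<subseteq> B" "dom qb \<subseteq> B" using R5 R6 unfolding partial_isometry_def by blast+
    have den1: "den (dom pb \<union> Inl ` A) d = den (Inl ` A) d"
      using denS[of "dom pb \<union> Inl ` A"] denS[of "Inl ` A"] dpbB R3 by auto
    have den2: "den (Inl ` A) d = den (dom qb \<union> Inl ` A) d"
      using denS[of "dom qb \<union> Inl ` A"] denS[of "Inl ` A"] dpbB R3 by auto
    have sg: "\<forall>x\<in>B. \<forall>y\<in>B. d x y \<in> add_semigroup_gen {dA a b | a b. a \<in> A \<and> b \<in> A}"
      using R15 unfolding SGA_def .
    show ?thesis
      by (rule exI[of _ B], rule exI[of _ d], rule exI[of _ pb], rule exI[of _ qb], rule exI[of _ K], rule exI[of _ v])
        (intro conjI R1 R2 R3 R4 R5 R6 R7 R8 R9 R10 R11 R12 R13 R14 sg den1 den2)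
  qed
next
  case False
  obtain a0 where a0: "a0 \<in> Fix p" "a0 \<in> Fix q" using assms(7) by blast
  have A0: "a0 \<in> A" using a0 assms(3) unfolding partial_isometry_def Fix_def by auto
  have Aeq: "A = {a0}" using False A0 by blast
  have qa0: "q a0 = Some a0" using a0 by (simp add: Fix_def)
  have dompA: "dom (lp p) \<subseteq> Inl ` A" "dom (lp q) \<subseteq> Inl ` A"
    using assms(3,4) by (auto simp: dom_lp partial_isometry_def)
  have ev: "\<forall>a\<in>A. eval_word [(T, 1)] (lp p) (lp q) (Inl a) = Some (Inl a0)"
    using Aeq qa0 by (simp add: ppow_def lp_Inl)
  have F0: "Fix p \<inter> Fix q = {a0}" using a0 Aeq assms(3) unfolding partial_isometry_def Fix_def by auto
  have free: "\<forall>x\<in>(\<lambda>a. the (eval_word [(T, 1)] (lp p) (lp q) (Inl a))) ` A. \<forall>y\<in>dom (lp p).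
       d0 dA x y = Min {d0 dA x z + d0 dA z y | z. z \<in> Inl ` (Fix p \<inter> Fix q)}"
  proof (intro ballI)
    fix x y assume x: "x \<in> (\<lambda>a. the (eval_word [(T, 1)] (lp p) (lp q) (Inl a))) ` A" and y: "y \<in> dom (lp p)"
    have xe: "x = Inl a0" using x ev Aeq by auto
    have ye: "y = Inl a0" using y dompA Aeq by auto
    have "{d0 dA x z + d0 dA z y | z. z \<in> Inl ` (Fix p \<inter> Fix q)} = {dA a0 a0 + dA a0 a0}"
      using F0 xe ye by (auto simp: d0_def)
    moreover have "dA a0 a0 = 0" using assms(2) A0 unfolding metric_on_def by auto
    ultimately show "d0 dA x y = Min {d0 dA x z + d0 dA z y | z. z \<in> Inl ` (Fix p \<inter> Fix q)}"
      using xe ye by (simp add: d0_def)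
  qed
  have rw: "reduced_word [(T, 1)]" by (simp add: reduced_word_def)
  have sg: "\<forall>x\<in>Inl ` A. \<forall>y\<in>Inl ` A. d0 dA x y \<in> add_semigroup_gen {dA a b | a b. a \<in> A \<and> b \<in> A}"
    by (auto simp: d0_def intro!: add_semigroup_gen.base)
  have den1: "den (dom (lp p) \<union> Inl ` A) (d0 dA) = den (Inl ` A) (d0 dA)"
    using dompA by (simp add: Un_absorb1)
  have den2: "den (Inl ` A) (d0 dA) = den (dom (lp q) \<union> Inl ` A) (d0 dA)"
    using dompA by (simp add: Un_absorb1)
  have pbp: "\<forall>x\<in>dom p. lp p (Inl x) = map_option Inl (p x)" by (simp add: lp_Inl)
  have qbq: "\<forall>x\<in>dom q. lp q (Inl x) = map_option Inl (q x)" by (simp add: lp_Inl)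
  have dA': "\<forall>a\<in>A. \<forall>b\<in>A. d0 dA (Inl a) (Inl b) = dA a b" by (simp add: d0_def)
  have evn: "\<forall>a\<in>A. eval_word [(T, 1)] (lp p) (lp q) (Inl a) \<noteq> None" using ev by simp
  show ?thesis
    apply (rule exI[of _ "Inl ` A"], rule exI[of _ "d0 dA"], rule exI[of _ "lp p"], rule exI[of _ "lp q"],
        rule exI[of _ 1], rule exI[of _ "[]"])
    apply (intro conjI)
    using assms(1) apply simp
    using metric_d0[OF assms(2)] apply simp
    apply simp
    using dA' apply simp
    using iso_lp[OF assms(3)] apply simp
    using iso_lp[OF assms(4)] apply simp
    using pbp apply simp
    using qbq apply simp
    apply simp
    using rw apply simp
    apply (rule Per_lp)
    apply (rule Per_lp)
    using evn apply simp
    using free apply simp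
    using sg apply simp
    using den1 apply simp
    using den2 apply simp
    done
qed

end
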